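(* Fix $\delta_0>0$ and an integer $l\ge1$. There exist $k_0$ and $C>0$ (depending on $l$ and $\delta_0$) such that for all $k\ge k_0$, all $\delta\in[\delta_0,1)$, and all real numbers $b_i\in[-1,1]$ ($i\in[k]$) and $b_{ij}=b_{ji}\in[-1,1]$ ($i\ne j\in[k]$), with $E,\Delta,\alpha,\beta,S_{1,l},S_{2,l},S_{3,l},A,Q,W$ as defined in the context, we have $E>0$ and \[\Big|\tfrac{l!}{E^l}S_{1,l}-\Big(\beta(1+\Delta)^l-\tfrac{A}{E}\,l(1+\Delta)^{l-1}-\tfrac{\beta Q}{E^2}\,l(l-1)(1+\Delta)^{l-2}\Big)\Big|\le \tfrac{C}{k},\] \[\Big|\tfrac{l!}{E^l}S_{2,l}-\alpha(1+\Delta)^l\Big|\le\tfrac{C}{k},\qquad \Big|\tfrac{l!}{E^l}S_{3,l}-\tfrac{\beta W}{E}\,l(1+\Delta)^{l-1}\Big|\le\tfrac Ck.\]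
   Context: Citizens are the indices $2,\dots,k$. Define $\alpha=b_1$, $\beta=\sum_{i=2}^k b_i$, $E=\frac{\delta^2k^2}{2}-\frac k2+1$, and $\Delta$ by $\sum_{2\le i<j\le k}b_{ij}=E(1+\Delta)$. For a set $M$ of disjoint 2-element sets write $b_M=\prod_{\{p,q\}\in M}b_{pq}$. Define: $S_{1,l}=\sum b_j\,b_M$ over all citizens $j$ and all unordered collections $M$ of $l$ pairwise disjoint 2-element subsets of $\{2,\dots,k\}\setminus\{j\}$; $S_{2,l}=b_1\sum_M b_M$ over all unordered collections $M$ of $l$ pairwise disjoint 2-element subsets of $\{2,\dots,k\}$; $S_{3,l}=\sum b_j\,b_{1i}\,b_M$ over all ordered pairs of distinct citizens $(j,i)$ and all unordered collections $M$ of $l-1$ pairwise disjoint 2-element subsets of $\{2,\dots,k\}\setminus\{i,j\}$; $A=\sum_{i\ne j\in\{2,\dots,k\}}b_i b_{ij}$; $Q=\sum b_{ij}b_{ij'}$ over all citizens $i$ and unordered pairs $\{j,j'\}$ of distinct citizens different from $i$; $W=\sum_{i=2}^k b_{1i}$. *)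

theory Defs
  imports Complex_Main
begin

text \<open>Vertices are 1..k; citizens are 2..k. Pair weights bb are symmetric; a
2-element set e gets weight bb (Min e) (Max e).\<close>

definition citizens :: "nat \<Rightarrow> nat set" where
  "citizens k = {2..k}"

definition two_sets :: "nat set \<Rightarrow> nat set set" where
  "two_sets S = {e. e \<subseteq> S \<and> card e = 2}"

definition matchings :: "nat set \<Rightarrow> nat \<Rightarrow> nat set set set" where
  "matchings S l = {M. M \<subseteq> two_sets S \<and> card M = l \<and> pairwise disjnt M}"

definition ew :: "(nat \<Rightarrow> nat \<Rightarrow> real) \<Rightarrow> nat set \<Rightarrow> real" where
  "ew bb e = bb (Min e) (Max e)"

definition bM :: "(nat \<Rightarrow> nat \<Rightarrow> real) \<Rightarrow> nat set set \<Rightarrow> real" where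
  "bM bb M = (\<Prod>e\<in>M. ew bb e)"

definition Eval :: "real \<Rightarrow> nat \<Rightarrow> real" where
  "Eval \<delta> k = \<delta>^2 * real k ^ 2 / 2 - real k / 2 + 1"

definition pair_sum :: "nat \<Rightarrow> (nat \<Rightarrow> nat \<Rightarrow> real) \<Rightarrow> real" where
  "pair_sum k bb = (\<Sum>i\<in>citizens k. \<Sum>j\<in>{i<..k}. bb i j)"

definition alpha :: "(nat \<Rightarrow> real) \<Rightarrow> real" where
  "alpha b = b 1"

definition beta :: "nat \<Rightarrow> (nat \<Rightarrow> real) \<Rightarrow> real" where
  "beta k b = (\<Sum>i\<in>citizens k. b i)"

definition S1 :: "nat \<Rightarrow> nat \<Rightarrow> (nat \<Rightarrow> real) \<Rightarrow> (nat \<Rightarrow> nat \<Rightarrow> real) \<Rightarrow> real" where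
  "S1 k l b bb = (\<Sum>j\<in>citizens k. \<Sum>M\<in>matchings (citizens k - {j}) l. b j * bM bb M)"

definition S2 :: "nat \<Rightarrow> nat \<Rightarrow> (nat \<Rightarrow> real) \<Rightarrow> (nat \<Rightarrow> nat \<Rightarrow> real) \<Rightarrow> real" where
  "S2 k l b bb = b 1 * (\<Sum>M\<in>matchings (citizens k) l. bM bb M)"

definition S3 :: "nat \<Rightarrow> nat \<Rightarrow> (nat \<Rightarrow> real) \<Rightarrow> (nat \<Rightarrow> nat \<Rightarrow> real) \<Rightarrow> real" where
  "S3 k l b bb = (\<Sum>j\<in>citizens k. \<Sum>i\<in>citizens k - {j}.
      \<Sum>M\<in>matchings (citizens k - {i, j}) (l - 1). b j * bb 1 i * bM bb M)"

definition Aval :: "nat \<Rightarrow> (nat \<Rightarrow> real) \<Rightarrow> (nat \<Rightarrow> nat \<Rightarrow> real) \<Rightarrow> real" where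
  "Aval k b bb = (\<Sum>i\<in>citizens k. \<Sum>j\<in>citizens k - {i}. b i * bb i j)"

definition Qval :: "nat \<Rightarrow> (nat \<Rightarrow> nat \<Rightarrow> real) \<Rightarrow> real" where
  "Qval k bb = (\<Sum>i\<in>citizens k. \<Sum>e\<in>two_sets (citizens k - {i}). \<Prod>j\<in>e. bb i j)"

definition Wval :: "nat \<Rightarrow> (nat \<Rightarrow> nat \<Rightarrow> real) \<Rightarrow> real" where
  "Wval k bb = (\<Sum>i\<in>citizens k. bb 1 i)"

end

theory Submission
  imports Defs
begin


definition mt :: "(nat set \<Rightarrow> real) \<Rightarrow> nat set \<Rightarrow> nat \<Rightarrow> real" where
  "mt w V l = (\<Sum>M\<in>matchings V l. \<Prod>e\<in>M. w e)"

lemma finite_two_sets: "finite V \<Longrightarrow> finite (two_sets V)"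
  unfolding two_sets_def by (rule finite_subset[of _ "Pow V"]) auto

lemma finite_matchings: "finite V \<Longrightarrow> finite (matchings V l)"
  unfolding matchings_def
  by (rule finite_subset[of _ "Pow (two_sets V)"]) (auto simp: finite_two_sets)

lemma matchings_0: assumes "finite V" shows "matchings V 0 = {{}}"
proof -
  have "\<And>M. M \<subseteq> two_sets V \<Longrightarrow> card M = 0 \<Longrightarrow> M = {}"
    using assms finite_two_sets by (meson card_0_eq finite_subset)
  then show ?thesis unfolding matchings_def by (auto simp: pairwise_def two_sets_def)
qed

lemma mt_0: "finite V \<Longrightarrow> mt w V 0 = 1"
  by (simp add: mt_def matchings_0)

lemma two_sets_mono: "U \<subseteq> V \<Longrightarrow> two_sets U \<subseteq> two_sets V"
  unfolding two_sets_def by auto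

lemma mt_rec:
  assumes fin: "finite V"
  shows "real (Suc l) * mt w V (Suc l) = (\<Sum>e\<in>two_sets V. w e * mt w (V - e) l)"
proof -
  have finM: "\<And>M. M \<in> matchings V (Suc l) \<Longrightarrow> finite M \<and> card M = Suc l"
    unfolding matchings_def using finite_two_sets[OF fin] by (auto intro: finite_subset)
  have "real (Suc l) * mt w V (Suc l) = (\<Sum>M\<in>matchings V (Suc l). \<Sum>e\<in>M. \<Prod>x\<in>M. w x)"
    unfolding mt_def sum_distrib_left
    by (rule sum.cong) (auto dest: finM)
  also have "\<dots> = (\<Sum>M\<in>matchings V (Suc l). \<Sum>e\<in>M. w e * (\<Prod>x\<in>M - {e}. w x))"
    by (rule sum.cong[OF refl], rule sum.cong[OF refl]) (meson finM prod.remove)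
  also have "\<dots> = (\<Sum>(M,e)\<in>Sigma (matchings V (Suc l)) (\<lambda>M. M). w e * (\<Prod>x\<in>M - {e}. w x))"
    by (subst sum.Sigma) (auto simp: finite_matchings fin dest: finM)
  also have "\<dots> = (\<Sum>(e,M')\<in>Sigma (two_sets V) (\<lambda>e. matchings (V - e) l). w e * (\<Prod>x\<in>M'. w x))"
  proof (rule sum.reindex_bij_witness[where i="\<lambda>(e,M'). (insert e M', e)" and j="\<lambda>(M,e). (e, M - {e})"])
    fix a assume a: "a \<in> Sigma (matchings V (Suc l)) (\<lambda>M. M)"
    then obtain M e where ae: "a = (M,e)" "M \<in> matchings V (Suc l)" "e \<in> M" by auto
    then show "(case case a of (M, e) \<Rightarrow> (e, M - {e}) of (e, M') \<Rightarrow> (insert e M', e)) = a" by auto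
    have Mp: "M \<subseteq> two_sets V" "card M = Suc l" "pairwise disjnt M" using ae(2) by (auto simp: matchings_def)
    have fM: "finite M" using finM ae(2) by auto
    have eT: "e \<in> two_sets V" using Mp ae by auto
    have "M - {e} \<subseteq> two_sets (V - e)"
    proof
      fix x assume x: "x \<in> M - {e}"
      then have "disjnt x e" using Mp(3) ae(3) by (auto simp: pairwise_def)
      moreover have "x \<in> two_sets V" using x Mp by auto
      ultimately show "x \<in> two_sets (V - e)" by (auto simp: two_sets_def disjnt_def)
    qed
    moreover have "card (M - {e}) = l" using Mp ae fM by auto
    moreover have "pairwise disjnt (M - {e})" using Mp(3) by (auto simp: pairwise_def)
    ultimately show "(case a of (M, e) \<Rightarrow> (e, M - {e})) \<in> Sigma (two_sets V) (\<lambda>e. matchings (V - e) l)"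
      using ae eT by (auto simp: matchings_def)
    show "(case case a of (M, e) \<Rightarrow> (e, M - {e}) of (e, M') \<Rightarrow> w e * prod w M') = (case a of (M, e) \<Rightarrow> w (e) * (\<Prod>x\<in>M - {e}. w x))"
      using ae by auto
  next
    fix b assume b: "b \<in> Sigma (two_sets V) (\<lambda>e. matchings (V - e) l)"
    then obtain e M' where be: "b = (e,M')" "e \<in> two_sets V" "M' \<in> matchings (V - e) l" by auto
    have Mp: "M' \<subseteq> two_sets (V - e)" "card M' = l" "pairwise disjnt M'" using be(3) by (auto simp: matchings_def)
    have fM: "finite M'" using finite_matchings be(3) fin
      by (meson Mp(1) finite_Diff finite_subset finite_two_sets)
    have ene: "e \<noteq> {}" using be(2) by (auto simp: two_sets_def)
    have enot: "e \<notin> M'"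
    proof
      assume "e \<in> M'"
      then have "e \<subseteq> V - e" using Mp(1) by (auto simp: two_sets_def)
      then show False using ene by auto
    qed
    then show "(case case b of (e, M') \<Rightarrow> (insert e M', e) of (M, e) \<Rightarrow> (e, M - {e})) = b" using be by auto
    have "insert e M' \<subseteq> two_sets V" using Mp(1) be(2) two_sets_mono[of "V - e" V] by auto
    moreover have "card (insert e M') = Suc l" using fM enot Mp by auto
    moreover have "pairwise disjnt (insert e M')"
      using Mp(3) Mp(1) unfolding pairwise_insert
      by (auto simp: two_sets_def disjnt_def)
    ultimately show "(case b of (e, M') \<Rightarrow> (insert e M', e)) \<in> Sigma (matchings V (Suc l)) (\<lambda>M. M)"
      using be by (auto simp: matchings_def)
  qed
  also have "\<dots> = (\<Sum>e\<in>two_sets V. w e * mt w (V - e) l)"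
    unfolding mt_def sum_distrib_left
    by (subst sum.Sigma[symmetric]) (auto simp: fin finite_two_sets finite_matchings)
  finally show ?thesis .
qed



lemma two_sets_elem:
  assumes "e \<in> two_sets V"
  shows "Min e < Max e \<and> e = {Min e, Max e} \<and> Min e \<in> V \<and> Max e \<in> V"
proof -
  from assms obtain a b where e: "e = {a,b}" "a \<noteq> b" "e \<subseteq> V"
    by (auto simp: two_sets_def card_2_iff)
  then show ?thesis by (cases "a < b") (auto simp: min_def max_def)
qed

lemma pair_in_two_sets: "i \<in> V \<Longrightarrow> j \<in> V \<Longrightarrow> i \<noteq> j \<Longrightarrow> {i,j} \<in> two_sets V"
  by (auto simp: two_sets_def)

lemma bridge:
  assumes fin: "finite V"
  shows "(\<Sum>e\<in>two_sets V. G e) = (\<Sum>i\<in>V. \<Sum>j\<in>{j\<in>V. i<j}. G {i,j})"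
proof -
  have "(\<Sum>i\<in>V. \<Sum>j\<in>{j\<in>V. i<j}. G {i,j}) = (\<Sum>(i,j)\<in>Sigma V (\<lambda>i. {j\<in>V. i<j}). G {i,j})"
    by (subst sum.Sigma) (auto simp: fin)
  also have "\<dots> = (\<Sum>e\<in>two_sets V. G e)"
  proof (rule sum.reindex_bij_witness[where i="\<lambda>e. (Min e, Max e)" and j="\<lambda>(i,j). {i,j}"])
    fix a assume "a \<in> Sigma V (\<lambda>i. {j\<in>V. i<j})"
    then obtain i j where a: "a = (i,j)" "i \<in> V" "j \<in> V" "i < j" by auto
    then show "(Min (case a of (i, j) \<Rightarrow> {i, j}), Max (case a of (i, j) \<Rightarrow> {i, j})) = a" by auto
    show "(case a of (i, j) \<Rightarrow> {i, j}) \<in> two_sets V" using a by (auto simp: two_sets_def)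
    show "G (case a of (i, j) \<Rightarrow> {i, j}) = (case a of (i, j) \<Rightarrow> G {i, j})" using a by auto
  next
    fix b assume "b \<in> two_sets V"
    from two_sets_elem[OF this] show "(case (Min b, Max b) of (i, j) \<Rightarrow> {i, j}) = b"
      "(Min b, Max b) \<in> Sigma V (\<lambda>i. {j \<in> V. i < j})" by auto
  qed
  finally show ?thesis by simp
qed

lemma symsum:
  fixes V :: "nat set" and H :: "nat \<Rightarrow> nat \<Rightarrow> real"
  assumes fin: "finite V"
  shows "(\<Sum>i\<in>V. \<Sum>j\<in>V-{i}. H i j) = (\<Sum>i\<in>V. \<Sum>j\<in>{j\<in>V. i<j}. H i j + H j i)"
proof -
  have split: "\<And>i. (\<Sum>j\<in>V-{i}. H i j) = (\<Sum>j\<in>{j\<in>V. i<j}. H i j) + (\<Sum>j\<in>{j\<in>V. j<i}. H i j)"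
  proof -
    fix i
    have eq: "V - {i} = {j\<in>V. i<j} \<union> {j\<in>V. j<i}" by auto
    show "(\<Sum>j\<in>V-{i}. H i j) = (\<Sum>j\<in>{j\<in>V. i<j}. H i j) + (\<Sum>j\<in>{j\<in>V. j<i}. H i j)"
      by (subst eq, rule sum.union_disjoint) (use fin in auto)
  qed
  have sw: "(\<Sum>i\<in>V. \<Sum>j\<in>{j\<in>V. j<i}. H i j) = (\<Sum>j\<in>V. \<Sum>i\<in>{i\<in>V. j<i}. H i j)"
    using sum.swap_restrict[OF fin fin, of "\<lambda>i j. H i j" "\<lambda>i j. j < i"] by simp
  show ?thesis unfolding split sum.distrib sw
    using sum.swap_restrict[OF fin fin] by simp
qed

lemma sq_sum:
  fixes g :: "nat \<Rightarrow> real"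
  assumes fin: "finite S"
  shows "(\<Sum>j\<in>S. g j)^2 = (\<Sum>j\<in>S. (g j)^2) + 2 * (\<Sum>e\<in>two_sets S. \<Prod>j\<in>e. g j)"
proof -
  have "(\<Sum>j\<in>S. g j)^2 = (\<Sum>i\<in>S. \<Sum>j\<in>S. g i * g j)"
    unfolding power2_eq_square by (rule sum_product)
  also have "\<dots> = (\<Sum>i\<in>S. (g i)^2 + (\<Sum>j\<in>S-{i}. g i * g j))"
    by (rule sum.cong[OF refl]) (simp add: fin sum.remove power2_eq_square)
  also have "\<dots> = (\<Sum>j\<in>S. (g j)^2) + (\<Sum>i\<in>S. \<Sum>j\<in>S-{i}. g i * g j)"
    by (simp add: sum.distrib)
  also have "(\<Sum>i\<in>S. \<Sum>j\<in>S-{i}. g i * g j) = (\<Sum>i\<in>S. \<Sum>j\<in>{j\<in>S. i<j}. 2 * (g i * g j))"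
    by (subst symsum[OF fin]) (simp add: mult.commute)
  also have "\<dots> = 2 * (\<Sum>e\<in>two_sets S. \<Prod>j\<in>e. g j)"
    by (subst bridge[OF fin]) (auto simp: sum_distrib_left intro!: sum.cong)
  finally show ?thesis .
qed

lemma card_two_sets: "finite V \<Longrightarrow> card (two_sets V) \<le> card V ^ 2"
proof -
  assume fin: "finite V"
  have "two_sets V \<subseteq> (\<lambda>(i,j). {i,j}) ` (V \<times> V)"
  proof
    fix e assume "e \<in> two_sets V"
    from two_sets_elem[OF this] show "e \<in> (\<lambda>(i,j). {i,j}) ` (V \<times> V)"
      by (auto intro!: image_eqI[where x="(Min e, Max e)"])
  qed
  then have "card (two_sets V) \<le> card ((\<lambda>(i,j). {i,j}) ` (V \<times> V))"
    by (rule card_mono[rotated]) (simp add: fin)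
  also have "\<dots> \<le> card (V \<times> V)" by (rule card_image_le) (simp add: fin)
  finally show ?thesis by (simp add: card_cartesian_product power2_eq_square)
qed

definition PP :: "(nat set \<Rightarrow> real) \<Rightarrow> nat set \<Rightarrow> real" where
  "PP w V = (\<Sum>e\<in>two_sets V. w e)"
definition dd :: "(nat set \<Rightarrow> real) \<Rightarrow> nat set \<Rightarrow> nat \<Rightarrow> real" where
  "dd w V i = (\<Sum>j\<in>V-{i}. w {i,j})"
definition RR :: "(nat set \<Rightarrow> real) \<Rightarrow> nat set \<Rightarrow> real" where
  "RR w V = (\<Sum>i\<in>V. (dd w V i)^2)"

lemma PP_remove:
  assumes fin: "finite V" and a: "a \<in> V"
  shows "PP w V = PP w (V - {a}) + dd w V a"
proof -
  have T: "two_sets V = two_sets (V - {a}) \<union> {e\<in>two_sets V. a \<in> e}"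
    by (auto simp: two_sets_def)
  have "PP w V = PP w (V - {a}) + (\<Sum>e\<in>{e\<in>two_sets V. a \<in> e}. w e)"
    unfolding PP_def by (subst T, rule sum.union_disjoint) (auto simp: fin finite_two_sets two_sets_def)
  also have "(\<Sum>e\<in>{e\<in>two_sets V. a \<in> e}. w e) = dd w V a"
    unfolding dd_def
  proof (rule sum.reindex_bij_witness[where i="\<lambda>j. {a,j}" and j="\<lambda>e. THE j. e = {a,j}"])
    fix e assume e: "e \<in> {e\<in>two_sets V. a \<in> e}"
    then obtain j where j: "e = {a,j}" "j \<in> V" "j \<noteq> a"
      by (auto simp: two_sets_def card_2_iff)
    have "(THE j. e = {a,j}) = j" using j by (intro the_equality) (auto simp: doubleton_eq_iff)
    then show "{a, THE j. e = {a, j}} = e" "(THE j. e = {a, j}) \<in> V - {a}" "w {a, THE j. e = {a, j}} = w e" using j by auto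
  next
    fix j assume j: "j \<in> V - {a}"
    show "(THE ja. {a, j} = {a, ja}) = j" using j by (intro the_equality) (auto simp: doubleton_eq_iff)
    show "{a, j} \<in> {e \<in> two_sets V. a \<in> e}" using j a by (auto simp: two_sets_def)
  qed
  finally show ?thesis .
qed

lemma dd_remove:
  assumes fin: "finite V" and "a \<in> V" "b \<in> V" "a \<noteq> b"
  shows "dd w (V - {a}) b = dd w V b - w {a,b}"
proof -
  have "V - {b} = insert a (V - {a} - {b})" using assms by auto
  then show ?thesis unfolding dd_def using assms
    by (simp add: fin insert_commute)
qed



definition wb :: "(nat set \<Rightarrow> real) \<Rightarrow> nat set \<Rightarrow> real \<Rightarrow> bool" where
  "wb w V N \<longleftrightarrow> (\<forall>e\<in>two_sets V. \<bar>w e\<bar> \<le> 1 / N^2)"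

lemma wb_mono: "U \<subseteq> V \<Longrightarrow> wb w V N \<Longrightarrow> wb w U N"
  unfolding wb_def using two_sets_mono by blast

locale setting =
  fixes w :: "nat set \<Rightarrow> real" and V :: "nat set" and N :: real
  assumes fin: "finite V" and cardV: "real (card V) \<le> N" and N1: "N \<ge> 1" and wbd: "wb w V N"
begin

lemma Npos: "N > 0" using N1 by simp

lemma cardT: "real (card (two_sets V)) \<le> N^2"
proof -
  have "real (card (two_sets V)) \<le> real (card V) ^ 2"
    using card_two_sets[OF fin] by (metis of_nat_le_iff of_nat_power)
  also have "\<dots> \<le> N^2" using cardV by (intro power_mono) auto
  finally show ?thesis .
qed

lemma abs_sum_w: "(\<Sum>e\<in>two_sets V. \<bar>w e\<bar>) \<le> 1"
proof -
  have "(\<Sum>e\<in>two_sets V. \<bar>w e\<bar>) \<le> (\<Sum>e\<in>two_sets V. 1 / N^2)"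
    using wbd unfolding wb_def by (intro sum_mono) auto
  also have "\<dots> = real (card (two_sets V)) / N^2" by simp
  also have "\<dots> \<le> 1" using cardT Npos by (simp add: divide_le_eq)
  finally show ?thesis .
qed

lemma PP_bound: "\<bar>PP w V\<bar> \<le> 1"
  unfolding PP_def using abs_sum_w sum_abs[of w "two_sets V"] by linarith

lemma SS_bound: "\<bar>\<Sum>e\<in>two_sets V. (w e)^2\<bar> \<le> 1 / N^2"
proof -
  have "\<bar>\<Sum>e\<in>two_sets V. (w e)^2\<bar> = (\<Sum>e\<in>two_sets V. \<bar>w e\<bar> * \<bar>w e\<bar>)"
    by (simp add: power2_eq_square abs_mult[symmetric] sum_nonneg)
  also have "\<dots> \<le> (\<Sum>e\<in>two_sets V. \<bar>w e\<bar> * (1/N^2))"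
    using wbd unfolding wb_def by (intro sum_mono mult_left_mono) auto
  also have "\<dots> = (\<Sum>e\<in>two_sets V. \<bar>w e\<bar>) * (1/N^2)" by (simp add: sum_distrib_right sum_divide_distrib)
  also have "\<dots> \<le> 1 / N^2" using abs_sum_w Npos
    by (intro mult_left_le_one_le) auto
  finally show ?thesis .
qed

lemma dd_bound: assumes "i \<in> V" shows "\<bar>dd w V i\<bar> \<le> 1 / N"
proof -
  have "\<bar>dd w V i\<bar> \<le> (\<Sum>j\<in>V-{i}. \<bar>w {i,j}\<bar>)" unfolding dd_def by (rule sum_abs)
  also have "\<dots> \<le> (\<Sum>j\<in>V-{i}. 1/N^2)"
    using wbd assms unfolding wb_def by (intro sum_mono) (auto simp: pair_in_two_sets)
  also have "\<dots> = real (card (V - {i})) / N^2" by simp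
  also have "\<dots> \<le> N / N^2" using cardV Npos card_Diff_subset[of "{i}" V] fin
    by (intro divide_right_mono) (auto simp: card_mono intro: order_trans[OF _ cardV])
  also have "\<dots> = 1 / N" using Npos by (simp add: power2_eq_square)
  finally show ?thesis .
qed

lemma RR_bound: "\<bar>RR w V\<bar> \<le> 1 / N"
proof -
  have "\<bar>RR w V\<bar> \<le> (\<Sum>i\<in>V. \<bar>(dd w V i)^2\<bar>)" unfolding RR_def by (rule sum_abs)
  also have "\<dots> \<le> (\<Sum>i\<in>V. 1/N^2)"
  proof (intro sum_mono)
    fix i assume "i \<in> V"
    then have "\<bar>dd w V i\<bar> \<le> 1/N" by (rule dd_bound)
    then have "\<bar>dd w V i\<bar>^2 \<le> (1/N)^2" by (intro power_mono) auto
    then show "\<bar>(dd w V i)^2\<bar> \<le> 1/N^2" by (simp add: power_divide)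
  qed
  also have "\<dots> = real (card V) / N^2" by simp
  also have "\<dots> \<le> N / N^2" using cardV Npos by (intro divide_right_mono) auto
  also have "\<dots> = 1 / N" using Npos by (simp add: power2_eq_square)
  finally show ?thesis .
qed

end

lemma setting_sub: "setting w V N \<Longrightarrow> U \<subseteq> V \<Longrightarrow> setting w U N"
  unfolding setting_def
  by (meson card_mono finite_subset of_nat_le_iff order_trans wb_mono)



lemma pow_diff_bound:
  fixes x y :: real
  assumes "\<bar>x\<bar> \<le> 1" "\<bar>y\<bar> \<le> 1"
  shows "\<bar>y^l - x^l\<bar> \<le> real l * \<bar>y - x\<bar>"
proof (induction l)
  case 0 then show ?case by simp
next
  case (Suc l)
  have "y^Suc l - x^Suc l = y * (y^l - x^l) + x^l * (y - x)" by (simp add: algebra_simps)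
  also have "\<bar>\<dots>\<bar> \<le> \<bar>y\<bar> * \<bar>y^l - x^l\<bar> + \<bar>x\<bar>^l * \<bar>y - x\<bar>"
    by (metis abs_mult abs_triangle_ineq power_abs)
  also have "\<dots> \<le> 1 * (real l * \<bar>y - x\<bar>) + 1 * \<bar>y - x\<bar>"
    using assms Suc by (intro add_mono mult_mono) (auto simp: power_le_one)
  finally show ?case by (simp add: algebra_simps)
qed

lemma taylor2:
  fixes x y :: real
  assumes "\<bar>x\<bar> \<le> 1" "\<bar>y\<bar> \<le> 1"
  shows "\<bar>y^l - x^l - real l * x^(l-1) * (y - x)\<bar> \<le> real l ^ 2 * (y - x)^2"
proof (induction l)
  case 0 then show ?case by simp
next
  case (Suc l)
  have id: "y^Suc l - x^Suc l - real (Suc l) * x^(Suc l - 1) * (y - x)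
      = y * (y^l - x^l - real l * x^(l-1) * (y - x)) + real l * x^(l-1) * (y - x) * (y - x)"
  proof (cases l)
    case 0 then show ?thesis by simp
  next
    case (Suc m) then show ?thesis by (simp add: algebra_simps)
  qed
  have "\<bar>real l * x^(l-1) * (y - x) * (y - x)\<bar> \<le> real l * (y-x)^2"
  proof -
    have "\<bar>x^(l-1)\<bar> \<le> 1" using assms by (simp add: power_abs power_le_one)
    then have "\<bar>real l * x^(l-1) * (y - x) * (y - x)\<bar> = real l * \<bar>x^(l-1)\<bar> * (y-x)^2"
      by (simp add: abs_mult power2_eq_square)
    also have "\<dots> \<le> real l * 1 * (y-x)^2" using \<open>\<bar>x^(l-1)\<bar> \<le> 1\<close>
      by (intro mult_mono) auto
    finally show ?thesis by simp
  qed
  moreover have "\<bar>y * (y^l - x^l - real l * x^(l-1) * (y - x))\<bar> \<le> real l ^ 2 * (y - x)^2"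
    using Suc assms(2) by (simp add: abs_mult) (meson abs_ge_zero mult_left_le_one_le order_trans)
  ultimately have "\<bar>y^Suc l - x^Suc l - real (Suc l) * x^(Suc l - 1) * (y - x)\<bar>
      \<le> real l ^ 2 * (y - x)^2 + real l * (y-x)^2"
    unfolding id by (smt (verit))
  also have "\<dots> \<le> real (Suc l) ^ 2 * (y - x)^2"
  proof -
    have "real l ^ 2 + real l \<le> real (Suc l) ^ 2" by (simp add: power2_eq_square algebra_simps)
    then have "(real l ^ 2 + real l) * (y-x)^2 \<le> real (Suc l) ^ 2 * (y-x)^2"
      by (intro mult_right_mono) auto
    then show ?thesis by (simp add: algebra_simps)
  qed
  finally show ?case .
qed

context setting begin

lemma dd_diff:
  assumes UV: "U \<subseteq> V" and c2: "card (V - U) \<le> 2" and iU: "i \<in> U"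
  shows "\<bar>dd w V i - dd w U i\<bar> \<le> 2 / N^2"
proof -
  have "dd w V i - dd w U i = (\<Sum>j\<in>(V-{i})-(U-{i}). w {i,j})"
    unfolding dd_def using UV fin by (subst sum_diff) (auto intro: finite_subset)
  also have "(V-{i})-(U-{i}) = V - U" using iU by auto
  finally have eq: "dd w V i - dd w U i = (\<Sum>j\<in>V - U. w {i,j})" .
  have "\<bar>\<Sum>j\<in>V - U. w {i,j}\<bar> \<le> (\<Sum>j\<in>V - U. \<bar>w {i,j}\<bar>)" by (rule sum_abs)
  also have "\<dots> \<le> (\<Sum>j\<in>V - U. 1 / N^2)"
  proof (intro sum_mono)
    fix j assume j: "j \<in> V - U"
    have "{i,j} \<in> two_sets V" using j iU UV by (intro pair_in_two_sets) auto
    then show "\<bar>w {i,j}\<bar> \<le> 1 / N^2" using wbd unfolding wb_def by auto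
  qed
  also have "\<dots> = real (card (V - U)) / N^2" by simp
  also have "\<dots> \<le> 2 / N^2" using c2 by (intro divide_right_mono) auto
  finally show ?thesis using eq by simp
qed

lemma RR_diff:
  assumes UV: "U \<subseteq> V" and c2: "card (V - U) \<le> 2"
  shows "\<bar>RR w V - RR w U\<bar> \<le> 6 / N^2"
proof -
  interpret U: setting w U N using setting_sub[OF setting_axioms UV] .
  have "RR w V = (\<Sum>i\<in>V - U. (dd w V i)^2) + (\<Sum>i\<in>U. (dd w V i)^2)"
    unfolding RR_def using UV fin by (subst sum.subset_diff[of U V]) auto
  then have eq: "RR w V - RR w U = (\<Sum>i\<in>V - U. (dd w V i)^2) + (\<Sum>i\<in>U. (dd w V i)^2 - (dd w U i)^2)"
    unfolding RR_def[of w U] by (simp add: sum_subtractf)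
  have b1: "\<bar>\<Sum>i\<in>V - U. (dd w V i)^2\<bar> \<le> 2 / N^2"
  proof -
    have "\<bar>\<Sum>i\<in>V - U. (dd w V i)^2\<bar> \<le> (\<Sum>i\<in>V - U. 1 / N^2)"
    proof -
      have "\<bar>\<Sum>i\<in>V - U. (dd w V i)^2\<bar> \<le> (\<Sum>i\<in>V - U. \<bar>(dd w V i)^2\<bar>)" by (rule sum_abs)
      also have "\<dots> \<le> (\<Sum>i\<in>V - U. 1 / N^2)"
      proof (intro sum_mono)
        fix i assume "i \<in> V - U"
        then have "\<bar>dd w V i\<bar> \<le> 1/N" using dd_bound by auto
        then have "\<bar>dd w V i\<bar>^2 \<le> (1/N)^2" by (intro power_mono) auto
        then show "\<bar>(dd w V i)^2\<bar> \<le> 1/N^2" by (simp add: power_divide)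
      qed
      finally show ?thesis .
    qed
    also have "\<dots> = real (card (V - U)) / N^2" by simp
    also have "\<dots> \<le> 2 / N^2" using c2 by (intro divide_right_mono) auto
    finally show ?thesis .
  qed
  have b2: "\<bar>\<Sum>i\<in>U. (dd w V i)^2 - (dd w U i)^2\<bar> \<le> 4 / N^2"
  proof -
    have "\<bar>\<Sum>i\<in>U. (dd w V i)^2 - (dd w U i)^2\<bar> \<le> (\<Sum>i\<in>U. \<bar>(dd w V i)^2 - (dd w U i)^2\<bar>)" by (rule sum_abs)
    also have "\<dots> \<le> (\<Sum>i\<in>U. 4 / N^3)"
    proof (intro sum_mono)
      fix i assume iU: "i \<in> U"
      have a1: "\<bar>dd w V i - dd w U i\<bar> \<le> 2 / N^2" using dd_diff[OF UV c2 iU] .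
      have a2: "\<bar>dd w V i + dd w U i\<bar> \<le> 2 / N"
        using dd_bound[of i] U.dd_bound[OF iU] iU UV by auto
      have "\<bar>(dd w V i)^2 - (dd w U i)^2\<bar> = \<bar>dd w V i - dd w U i\<bar> * \<bar>dd w V i + dd w U i\<bar>"
        by (simp add: power2_eq_square abs_mult[symmetric] algebra_simps)
      also have "\<dots> \<le> (2 / N^2) * (2 / N)" using a1 a2 by (intro mult_mono) auto
      also have "\<dots> = 4 / N^3" by (simp add: power2_eq_square power3_eq_cube)
      finally show "\<bar>(dd w V i)^2 - (dd w U i)^2\<bar> \<le> 4 / N^3" .
    qed
    also have "\<dots> = real (card U) * (4 / N^3)" by simp
    also have "\<dots> \<le> N * (4 / N^3)" using U.cardV Npos by (intro mult_right_mono) auto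
    also have "\<dots> = 4 / N^2" using Npos by (simp add: power2_eq_square power3_eq_cube)
    finally show ?thesis .
  qed
  show ?thesis using eq b1 b2 by linarith
qed

lemma PP_diff:
  assumes UV: "U \<subseteq> V" and c2: "card (V - U) \<le> 2"
  shows "\<bar>PP w V - PP w U\<bar> \<le> 2 / N"
proof -
  have TU: "two_sets U \<subseteq> two_sets V" using UV by (rule two_sets_mono)
  have eq: "PP w V - PP w U = (\<Sum>e\<in>two_sets V - two_sets U. w e)"
    unfolding PP_def using TU by (subst sum_diff) (auto simp: fin finite_two_sets)
  have sub: "two_sets V - two_sets U \<subseteq> (\<Union>a\<in>V - U. (\<lambda>j. {a,j}) ` V)"
  proof
    fix e assume e: "e \<in> two_sets V - two_sets U"
    from two_sets_elem[of e V] e have ee: "e = {Min e, Max e}" "Min e \<in> V" "Max e \<in> V" "Min e < Max e" by auto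
    have "\<not> e \<subseteq> U" using e ee by (auto simp: two_sets_def)
    then have "Min e \<notin> U \<or> Max e \<notin> U" using ee(1) by (metis empty_subsetI insert_subset)
    then show "e \<in> (\<Union>a\<in>V - U. (\<lambda>j. {a,j}) ` V)"
    proof
      assume "Min e \<notin> U" then show ?thesis using ee by blast
    next
      assume "Max e \<notin> U" then show ?thesis using ee
        by (intro UN_I[of "Max e"]) (auto intro!: image_eqI[of _ _ "Min e"])
    qed
  qed
  have "card (two_sets V - two_sets U) \<le> card (\<Union>a\<in>V - U. (\<lambda>j. {a,j}) ` V)"
    by (rule card_mono[OF _ sub]) (simp add: fin)
  also have "\<dots> \<le> (\<Sum>a\<in>V - U. card ((\<lambda>j. {a,j}) ` V))" by (rule card_UN_le) (simp add: fin)
  also have "\<dots> \<le> (\<Sum>a\<in>V - U. card V)" by (intro sum_mono card_image_le fin)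
  also have "\<dots> = card (V - U) * card V" by simp
  finally have cnat: "card (two_sets V - two_sets U) \<le> card (V - U) * card V" .
  have creal: "real (card (two_sets V - two_sets U)) \<le> 2 * N"
  proof -
    have "real (card (two_sets V - two_sets U)) \<le> real (card (V - U)) * real (card V)"
      using cnat by (metis of_nat_le_iff of_nat_mult)
    also have "\<dots> \<le> 2 * N" using c2 cardV by (intro mult_mono) auto
    finally show ?thesis .
  qed
  have "\<bar>\<Sum>e\<in>two_sets V - two_sets U. w e\<bar> \<le> (\<Sum>e\<in>two_sets V - two_sets U. \<bar>w e\<bar>)" by (rule sum_abs)
  also have "\<dots> \<le> (\<Sum>e\<in>two_sets V - two_sets U. 1 / N^2)"
    using wbd unfolding wb_def by (intro sum_mono) auto
  also have "\<dots> = real (card (two_sets V - two_sets U)) / N^2" by simp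
  also have "\<dots> \<le> 2 * N / N^2" using creal by (intro divide_right_mono) auto
  also have "\<dots> = 2 / N" using Npos by (simp add: power2_eq_square)
  finally show ?thesis using eq by simp
qed

lemma D_eq:
  assumes e: "e \<in> two_sets V"
  shows "PP w V - PP w (V - e) = dd w V (Min e) + dd w V (Max e) - w e"
proof -
  from two_sets_elem[OF e] have ee: "e = {Min e, Max e}" "Min e \<in> V" "Max e \<in> V" "Min e < Max e" by auto
  let ?a = "Min e" and ?b = "Max e"
  have "PP w V = PP w (V - {?a}) + dd w V ?a" using PP_remove[OF fin ee(2)] .
  moreover have "PP w (V - {?a}) = PP w (V - {?a} - {?b}) + dd w (V - {?a}) ?b"
    using PP_remove[of "V - {?a}" ?b] fin ee by auto
  moreover have "dd w (V - {?a}) ?b = dd w V ?b - w {?a, ?b}"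
    using dd_remove[OF fin ee(2) ee(3)] ee(4) by auto
  moreover have "V - {?a} - {?b} = V - e" using ee by auto
  ultimately show ?thesis using ee(1) by simp
qed

lemma sum_wD:
  "(\<Sum>e\<in>two_sets V. w e * (PP w V - PP w (V - e))) = RR w V - (\<Sum>e\<in>two_sets V. (w e)^2)"
proof -
  have "(\<Sum>e\<in>two_sets V. w e * (PP w V - PP w (V - e)))
      = (\<Sum>e\<in>two_sets V. w e * (dd w V (Min e) + dd w V (Max e))) - (\<Sum>e\<in>two_sets V. (w e)^2)"
    by (simp add: D_eq sum_subtractf[symmetric] algebra_simps power2_eq_square cong: sum.cong)
  also have "(\<Sum>e\<in>two_sets V. w e * (dd w V (Min e) + dd w V (Max e)))
      = (\<Sum>i\<in>V. \<Sum>j\<in>{j\<in>V. i<j}. w {i,j} * dd w V i + w {j,i} * dd w V j)"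
    by (subst bridge[OF fin]) (auto intro!: sum.cong simp: algebra_simps insert_commute)
  also have "\<dots> = (\<Sum>i\<in>V. \<Sum>j\<in>V-{i}. w {i,j} * dd w V i)"
    by (rule symsum[OF fin, symmetric])
  also have "\<dots> = RR w V"
    unfolding RR_def dd_def by (simp add: sum_distrib_right power2_eq_square)
  finally show ?thesis .
qed

end


definition FF :: "(nat set \<Rightarrow> real) \<Rightarrow> nat set \<Rightarrow> nat \<Rightarrow> real" where
  "FF w V l = fact l * mt w V l"

definition cc :: "nat \<Rightarrow> real" where "cc l = real l * (real l - 1) / 2"

lemma FF_0: "finite V \<Longrightarrow> FF w V 0 = 1" by (simp add: FF_def mt_0)

lemma FF_rec: "finite V \<Longrightarrow> FF w V (Suc l) = (\<Sum>e\<in>two_sets V. w e * FF w (V - e) l)"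
proof -
  assume fin: "finite V"
  have "FF w V (Suc l) = fact l * (real (Suc l) * mt w V (Suc l))"
    unfolding FF_def by (simp add: algebra_simps)
  also have "\<dots> = fact l * (\<Sum>e\<in>two_sets V. w e * mt w (V - e) l)" by (subst mt_rec[OF fin]) simp
  finally show ?thesis unfolding FF_def by (simp add: sum_distrib_left algebra_simps)
qed

lemma cc_id: "cc (Suc l) * x^(Suc l - 2) = real l * x^(l-1) + cc l * x^(l-2) * x"
proof (cases l)
  case 0 then show ?thesis by (simp add: cc_def)
next
  case (Suc m) note m = this
  show ?thesis
  proof (cases m)
    case 0 then show ?thesis using m by (simp add: cc_def)
  next
    case (Suc n) then show ?thesis using m by (simp add: cc_def algebra_simps)
  qed
qed

lemma main_est:
  "\<exists>K. \<forall>w V N. setting w V N \<longrightarrow>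
     \<bar>FF w V l - (PP w V ^ l - cc l * RR w V * PP w V ^ (l-2))\<bar> \<le> K / N^2"
proof (induction l)
  case 0
  show ?case by (rule exI[of _ 0]) (auto simp: setting_def FF_0 cc_def)
next
  case (Suc l)
  from Suc obtain K where K: "\<And>w V N. setting w V N \<Longrightarrow>
     \<bar>FF w V l - (PP w V ^ l - cc l * RR w V * PP w V ^ (l-2))\<bar> \<le> K / N^2" by blast
  define B where "B = 4 * real l ^ 2 + \<bar>cc l\<bar> * (6 + 2 * real l) + K"
  show ?case
  proof (rule exI[of _ "real l + B"], intro allI impI)
    fix w V N assume st: "setting w V N"
    interpret setting w V N by (rule st)
    define x where "x = PP w V"
    define R where "R = RR w V"
    define Z where "Z e = FF w (V - e) l - (x^l - real l * x^(l-1) * (x - PP w (V - e)) - cc l * R * x^(l-2))" for e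
    have Zb: "\<bar>Z e\<bar> \<le> B / N^2" if e: "e \<in> two_sets V" for e
    proof -
      have eV: "e \<subseteq> V" "card e = 2" using e by (auto simp: two_sets_def)
      have sU: "setting w (V - e) N" using setting_sub[OF st] by auto
      interpret U: setting w "V - e" N by (rule sU)
      have c2: "card (V - (V - e)) \<le> 2" using eV by (simp add: Diff_Diff_Int Int_absorb1)
      define y where "y = PP w (V - e)"
      define Re where "Re = RR w (V - e)"
      have err: "\<bar>FF w (V - e) l - (y ^ l - cc l * Re * y ^ (l-2))\<bar> \<le> K / N^2"
        using K[OF sU] unfolding y_def Re_def .
      have xb: "\<bar>x\<bar> \<le> 1" unfolding x_def by (rule PP_bound)
      have yb: "\<bar>y\<bar> \<le> 1" unfolding y_def by (rule U.PP_bound)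
      have D: "\<bar>y - x\<bar> \<le> 2 / N" using PP_diff[of "V - e"] c2 unfolding x_def y_def by auto
      have g: "\<bar>y^l - x^l - real l * x^(l-1) * (y - x)\<bar> \<le> 4 * real l ^ 2 / N^2"
      proof -
        have "\<bar>y^l - x^l - real l * x^(l-1) * (y - x)\<bar> \<le> real l ^ 2 * (y - x)^2" by (rule taylor2[OF xb yb])
        also have "(y - x)^2 \<le> (2 / N)^2" using D by (metis abs_le_square_iff abs_of_nonneg Npos less_eq_real_def zero_le_divide_iff zero_le_numeral)
        then have "real l ^ 2 * (y - x)^2 \<le> real l ^ 2 * (2/N)^2" by (intro mult_left_mono) auto
        finally show ?thesis by (simp add: power_divide mult.commute)
      qed
      have h: "\<bar>Re * y^(l-2) - R * x^(l-2)\<bar> \<le> (6 + 2 * real l) / N^2"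
      proof -
        have "Re * y^(l-2) - R * x^(l-2) = (Re - R) * y^(l-2) + R * (y^(l-2) - x^(l-2))" by (simp add: algebra_simps)
        also have "\<bar>\<dots>\<bar> \<le> \<bar>Re - R\<bar> * \<bar>y^(l-2)\<bar> + \<bar>R\<bar> * \<bar>y^(l-2) - x^(l-2)\<bar>"
          by (metis abs_mult abs_triangle_ineq)
        also have "\<dots> \<le> (6 / N^2) * 1 + (1 / N) * (real (l-2) * (2 / N))"
        proof (intro add_mono mult_mono)
          show "\<bar>Re - R\<bar> \<le> 6 / N^2" using RR_diff[of "V - e"] c2 unfolding Re_def R_def by (simp add: abs_minus_commute)
          show "\<bar>y^(l-2)\<bar> \<le> 1" using yb by (simp add: power_abs power_le_one)
          show "\<bar>R\<bar> \<le> 1 / N" unfolding R_def by (rule RR_bound)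
          have "\<bar>y^(l-2) - x^(l-2)\<bar> \<le> real (l-2) * \<bar>y - x\<bar>" by (rule pow_diff_bound[OF xb yb])
          also have "\<dots> \<le> real (l-2) * (2/N)" using D by (intro mult_left_mono) auto
          finally show "\<bar>y^(l-2) - x^(l-2)\<bar> \<le> real (l-2) * (2 / N)" .
        qed (use N1 in auto)
        also have "\<dots> \<le> (6 + 2 * real l) / N^2"
        proof -
          have "(1 / N) * (real (l-2) * (2 / N)) = 2 * real (l-2) / N^2" by (simp add: power2_eq_square)
          moreover have "2 * real (l-2) / N^2 \<le> 2 * real l / N^2" by (intro divide_right_mono) auto
          ultimately show ?thesis by (simp add: add_divide_distrib)
        qed
        finally show ?thesis .
      qed
      have Zeq: "Z e = (FF w (V - e) l - (y ^ l - cc l * Re * y ^ (l-2)))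
                 + (y^l - x^l - real l * x^(l-1) * (y - x)) - cc l * (Re * y^(l-2) - R * x^(l-2))"
        unfolding Z_def y_def Re_def by (simp add: algebra_simps)
      have "\<bar>Z e\<bar> \<le> K / N^2 + 4 * real l ^ 2 / N^2 + \<bar>cc l\<bar> * ((6 + 2 * real l) / N^2)"
      proof -
        have t: "\<And>a b c d::real. \<bar>a + b - c*d\<bar> \<le> \<bar>a\<bar> + \<bar>b\<bar> + \<bar>c\<bar>*\<bar>d\<bar>"
          by (simp add: abs_mult[symmetric])
        have hh: "\<bar>cc l\<bar> * \<bar>Re * y^(l-2) - R * x^(l-2)\<bar> \<le> \<bar>cc l\<bar> * ((6 + 2 * real l) / N^2)"
          using h by (rule mult_left_mono) simp
        show ?thesis unfolding Zeq using t[of _ _ "cc l"] err g hh by (meson add_mono order_trans)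
      qed
      also have "\<dots> = B / N^2" unfolding B_def using Npos by (simp add: field_simps)
      finally show ?thesis .
    qed
    have "FF w V (Suc l) = (\<Sum>e\<in>two_sets V. w e * FF w (V - e) l)" by (rule FF_rec[OF fin])
    also have "\<dots> = (\<Sum>e\<in>two_sets V. w e * (x^l - cc l * R * x^(l-2)) - real l * x^(l-1) * (w e * (x - PP w (V - e))) + w e * Z e)"
      by (rule sum.cong[OF refl]) (simp add: Z_def algebra_simps)
    also have "\<dots> = x * (x^l - cc l * R * x^(l-2)) - real l * x^(l-1) * (R - (\<Sum>e\<in>two_sets V. (w e)^2)) + (\<Sum>e\<in>two_sets V. w e * Z e)"
    proof -
      have s1: "(\<Sum>e\<in>two_sets V. w e * (x^l - cc l * R * x^(l-2))) = x * (x^l - cc l * R * x^(l-2))"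
        unfolding x_def PP_def by (rule sum_distrib_right[symmetric])
      have s2: "(\<Sum>e\<in>two_sets V. real l * x^(l-1) * (w e * (x - PP w (V - e)))) = real l * x^(l-1) * (R - (\<Sum>e\<in>two_sets V. (w e)^2))"
        unfolding sum_distrib_left[symmetric] x_def R_def by (rule arg_cong[where f="\<lambda>t. _ * t"], rule sum_wD)
      show ?thesis unfolding sum.distrib sum_subtractf s1 s2 ..
    qed
    finally have FFeq: "FF w V (Suc l) = x * (x^l - cc l * R * x^(l-2)) - real l * x^(l-1) * (R - (\<Sum>e\<in>two_sets V. (w e)^2)) + (\<Sum>e\<in>two_sets V. w e * Z e)" .
    have "FF w V (Suc l) - (x ^ Suc l - cc (Suc l) * R * x ^ (Suc l - 2))
       = real l * x^(l-1) * (\<Sum>e\<in>two_sets V. (w e)^2) + (\<Sum>e\<in>two_sets V. w e * Z e)"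
    proof -
      have "cc (Suc l) * R * x ^ (Suc l - 2) = R * (real l * x^(l-1) + cc l * x^(l-2) * x)"
        using cc_id[of l x] by (simp add: algebra_simps)
      then show ?thesis unfolding FFeq by (simp add: algebra_simps)
    qed
    moreover have "\<bar>real l * x^(l-1) * (\<Sum>e\<in>two_sets V. (w e)^2)\<bar> \<le> real l / N^2"
    proof -
      have xb: "\<bar>x\<bar> \<le> 1" unfolding x_def by (rule PP_bound)
      have "\<bar>real l * x^(l-1) * (\<Sum>e\<in>two_sets V. (w e)^2)\<bar> = real l * \<bar>x\<bar>^(l-1) * \<bar>\<Sum>e\<in>two_sets V. (w e)^2\<bar>"
        by (simp add: abs_mult power_abs)
      also have "\<dots> \<le> real l * 1 * (1 / N^2)"
        using xb SS_bound by (intro mult_mono) (auto simp: power_le_one)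
      finally show ?thesis by simp
    qed
    moreover have "\<bar>\<Sum>e\<in>two_sets V. w e * Z e\<bar> \<le> B / N^2"
    proof -
      have "\<bar>\<Sum>e\<in>two_sets V. w e * Z e\<bar> \<le> (\<Sum>e\<in>two_sets V. \<bar>w e\<bar> * (B / N^2))"
      proof (intro order_trans[OF sum_abs] sum_mono)
        fix e assume "e \<in> two_sets V"
        then show "\<bar>w e * Z e\<bar> \<le> \<bar>w e\<bar> * (B / N^2)" unfolding abs_mult
          using Zb by (intro mult_left_mono) auto
      qed
      also have "\<dots> = (\<Sum>e\<in>two_sets V. \<bar>w e\<bar>) * (B / N^2)" by (rule sum_distrib_right[symmetric])
      also have "\<dots> \<le> 1 * (B / N^2)"
      proof (rule mult_right_mono[OF abs_sum_w])
        have "\<bar>Z e\<bar> \<le> B / N^2" if "e \<in> two_sets V" for e using Zb that .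
        show "0 \<le> B / N^2"
        proof (cases "two_sets V = {}")
          case True
          have "B \<ge> 0"
          proof -
            have "K / N^2 \<ge> 0"
            proof -
              have "setting w {} N" using setting_sub[OF st] by auto
              from K[OF this] show ?thesis by (smt (verit))
            qed
            then have "K \<ge> 0" using Npos by (simp add: zero_le_divide_iff)
            then show ?thesis unfolding B_def by (smt (verit) abs_ge_zero mult_nonneg_nonneg zero_le_power2 of_nat_0_le_iff)
          qed
          then show ?thesis by simp
        next
          case False
          then obtain e where "e \<in> two_sets V" by auto
          from Zb[OF this] show ?thesis by (smt (verit))
        qed
      qed
      finally show ?thesis by simp
    qed
    ultimately show "\<bar>FF w V (Suc l) - (PP w V ^ Suc l - cc (Suc l) * RR w V * PP w V ^ (Suc l - 2))\<bar> \<le> (real l + B) / N^2"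
      unfolding x_def[symmetric] R_def[symmetric] by (smt (verit) add_divide_distrib)
  qed
qed



definition QQ :: "(nat set \<Rightarrow> real) \<Rightarrow> nat set \<Rightarrow> real" where
  "QQ w V = (\<Sum>i\<in>V. \<Sum>e\<in>two_sets (V - {i}). \<Prod>j\<in>e. w {i,j})"

context setting begin

lemma RR_QQ: "\<bar>RR w V - 2 * QQ w V\<bar> \<le> 1 / N^2"
proof -
  have "RR w V = (\<Sum>i\<in>V. (\<Sum>j\<in>V-{i}. (w {i,j})^2) + 2 * (\<Sum>e\<in>two_sets (V-{i}). \<Prod>j\<in>e. w {i,j}))"
    unfolding RR_def dd_def by (rule sum.cong[OF refl]) (rule sq_sum, simp add: fin)
  then have eq: "RR w V - 2 * QQ w V = (\<Sum>i\<in>V. \<Sum>j\<in>V-{i}. (w {i,j})^2)"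
    unfolding QQ_def by (simp add: sum.distrib sum_distrib_left)
  have "(\<Sum>i\<in>V. \<Sum>j\<in>V-{i}. (w {i,j})^2) \<le> (\<Sum>i\<in>V. \<Sum>j\<in>V-{i}. 1 / N^4)"
  proof (intro sum_mono)
    fix i j assume "i \<in> V" "j \<in> V - {i}"
    then have "{i,j} \<in> two_sets V" by (intro pair_in_two_sets) auto
    then have "\<bar>w {i,j}\<bar> \<le> 1 / N^2" using wbd unfolding wb_def by auto
    then have "\<bar>w {i,j}\<bar>^2 \<le> (1/N^2)^2" by (intro power_mono) auto
    then show "(w {i,j})^2 \<le> 1 / N^4" by (simp add: power_divide power_mult[symmetric])
  qed
  also have "\<dots> \<le> (\<Sum>i\<in>V. N * (1 / N^4))"
  proof (intro sum_mono)
    fix i assume "i \<in> V"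
    have "real (card (V - {i})) \<le> N"
      using cardV card_Diff_subset[of "{i}" V] fin by (meson card_Diff1_le of_nat_le_iff order_trans)
    then show "(\<Sum>j\<in>V-{i}. 1 / N^4) \<le> N * (1 / N^4)" by (simp add: divide_right_mono)
  qed
  also have "\<dots> = real (card V) * (N * (1 / N^4))" by simp
  also have "\<dots> \<le> N * (N * (1 / N^4))" using cardV Npos by (intro mult_right_mono) auto
  also have "\<dots> = 1 / N^2" using Npos by (simp add: power2_eq_square power4_eq_xxxx)
  finally have up: "(\<Sum>i\<in>V. \<Sum>j\<in>V-{i}. (w {i,j})^2) \<le> 1 / N^2" .
  have "0 \<le> (\<Sum>i\<in>V. \<Sum>j\<in>V-{i}. (w {i,j})^2)" by (intro sum_nonneg) auto
  then show ?thesis using eq up by simp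
qed

end

lemma first_order:
  "\<exists>K. \<forall>w V U N. setting w V N \<longrightarrow> U \<subseteq> V \<longrightarrow> card (V - U) \<le> 2 \<longrightarrow>
     \<bar>FF w U m - PP w V ^ m\<bar> \<le> K / N"
proof -
  obtain K where K: "\<And>w V N. setting w V N \<Longrightarrow>
     \<bar>FF w V m - (PP w V ^ m - cc m * RR w V * PP w V ^ (m-2))\<bar> \<le> K / N^2"
    using main_est[of m] by blast
  show ?thesis
  proof (rule exI[of _ "\<bar>K\<bar> + \<bar>cc m\<bar> + 2 * real m"], intro allI impI)
    fix w V U N assume st: "setting w V N" and UV: "U \<subseteq> V" and c2: "card (V - U) \<le> 2"
    interpret setting w V N by (rule st)
    interpret U: setting w U N by (rule setting_sub[OF st UV])
    have e1: "\<bar>FF w U m - (PP w U ^ m - cc m * RR w U * PP w U ^ (m-2))\<bar> \<le> \<bar>K\<bar> / N"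
    proof -
      have "K / N^2 \<le> \<bar>K\<bar> / N^2" by (simp add: divide_right_mono)
      also have "\<dots> \<le> \<bar>K\<bar> / N" using N1
        by (intro divide_left_mono) (auto simp: power2_eq_square)
      finally show ?thesis using K[OF U.setting_axioms] by linarith
    qed
    have e2: "\<bar>cc m * RR w U * PP w U ^ (m-2)\<bar> \<le> \<bar>cc m\<bar> / N"
    proof -
      have "\<bar>cc m * RR w U * PP w U ^ (m-2)\<bar> = \<bar>cc m\<bar> * \<bar>RR w U\<bar> * \<bar>PP w U\<bar> ^ (m-2)"
        by (simp add: abs_mult power_abs)
      also have "\<dots> \<le> \<bar>cc m\<bar> * (1 / N) * 1"
        using U.RR_bound U.PP_bound by (intro mult_mono mult_left_mono) (use Npos in \<open>auto simp: power_le_one\<close>)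
      finally show ?thesis by simp
    qed
    have e3: "\<bar>PP w U ^ m - PP w V ^ m\<bar> \<le> 2 * real m / N"
    proof -
      have "\<bar>PP w U ^ m - PP w V ^ m\<bar> \<le> real m * \<bar>PP w U - PP w V\<bar>"
        by (rule pow_diff_bound[OF PP_bound U.PP_bound])
      also have "\<dots> \<le> real m * (2 / N)" using PP_diff[OF UV c2]
        by (intro mult_left_mono) (auto simp: abs_minus_commute)
      finally show ?thesis by (simp add: mult.commute)
    qed
    show "\<bar>FF w U m - PP w V ^ m\<bar> \<le> (\<bar>K\<bar> + \<bar>cc m\<bar> + 2 * real m) / N"
      using e1 e2 e3 by (simp add: add_divide_distrib) linarith
  qed
qed

lemma vertex_est:
  "\<exists>K. \<forall>w V N j. setting w V N \<longrightarrow> j \<in> V \<longrightarrow>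
     \<bar>FF w (V - {j}) l - (PP w V ^ l - real l * PP w V ^ (l-1) * dd w V j
        - real l * (real l - 1) * QQ w V * PP w V ^ (l-2))\<bar> \<le> K / N^2"
proof -
  obtain K where K: "\<And>w V N. setting w V N \<Longrightarrow>
     \<bar>FF w V l - (PP w V ^ l - cc l * RR w V * PP w V ^ (l-2))\<bar> \<le> K / N^2"
    using main_est[of l] by blast
  show ?thesis
  proof (rule exI[of _ "K + real l ^ 2 + \<bar>cc l\<bar> * (6 + 2 * real l) + \<bar>cc l\<bar>"], intro allI impI)
    fix w V N j assume st: "setting w V N" and jV: "j \<in> V"
    interpret setting w V N by (rule st)
    have UV: "V - {j} \<subseteq> V" by auto
    have c2: "card (V - (V - {j})) \<le> 2" using jV by (simp add: Diff_Diff_Int)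
    interpret U: setting w "V - {j}" N by (rule setting_sub[OF st UV])
    define x where "x = PP w V"
    define y where "y = PP w (V - {j})"
    define R where "R = RR w V"
    define Re where "Re = RR w (V - {j})"
    define d where "d = dd w V j"
    define Q where "Q = QQ w V"
    have xb: "\<bar>x\<bar> \<le> 1" unfolding x_def by (rule PP_bound)
    have yb: "\<bar>y\<bar> \<le> 1" unfolding y_def by (rule U.PP_bound)
    have yx: "y - x = - d" using PP_remove[OF fin jV] unfolding x_def y_def d_def by simp
    have db: "\<bar>d\<bar> \<le> 1 / N" unfolding d_def by (rule dd_bound[OF jV])
    have D: "\<bar>y - x\<bar> \<le> 2 / N" using PP_diff[OF UV c2] unfolding x_def y_def by (simp add: abs_minus_commute)
    have err: "\<bar>FF w (V - {j}) l - (y ^ l - cc l * Re * y ^ (l-2))\<bar> \<le> K / N^2"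
      using K[OF U.setting_axioms] unfolding y_def Re_def .
    have g: "\<bar>y^l - x^l - real l * x^(l-1) * (y - x)\<bar> \<le> real l ^ 2 / N^2"
    proof -
      have "\<bar>y^l - x^l - real l * x^(l-1) * (y - x)\<bar> \<le> real l ^ 2 * (y - x)^2" by (rule taylor2[OF xb yb])
      also have "(y - x)^2 \<le> (1 / N)^2" using db yx
        by (metis abs_le_square_iff abs_minus_cancel abs_of_nonneg Npos less_eq_real_def zero_le_divide_iff zero_le_one)
      then have "real l ^ 2 * (y - x)^2 \<le> real l ^ 2 * (1/N)^2" by (intro mult_left_mono) auto
      finally show ?thesis by (simp add: power_divide)
    qed
    have h: "\<bar>Re * y^(l-2) - R * x^(l-2)\<bar> \<le> (6 + 2 * real l) / N^2"
    proof -
      have "Re * y^(l-2) - R * x^(l-2) = (Re - R) * y^(l-2) + R * (y^(l-2) - x^(l-2))" by (simp add: algebra_simps)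
      also have "\<bar>\<dots>\<bar> \<le> \<bar>Re - R\<bar> * \<bar>y^(l-2)\<bar> + \<bar>R\<bar> * \<bar>y^(l-2) - x^(l-2)\<bar>"
        by (metis abs_mult abs_triangle_ineq)
      also have "\<dots> \<le> (6 / N^2) * 1 + (1 / N) * (real (l-2) * (2 / N))"
      proof (intro add_mono mult_mono)
        show "\<bar>Re - R\<bar> \<le> 6 / N^2" using RR_diff[OF UV c2] unfolding Re_def R_def by (simp add: abs_minus_commute)
        show "\<bar>y^(l-2)\<bar> \<le> 1" using yb by (simp add: power_abs power_le_one)
        show "\<bar>R\<bar> \<le> 1 / N" unfolding R_def by (rule RR_bound)
        have "\<bar>y^(l-2) - x^(l-2)\<bar> \<le> real (l-2) * \<bar>y - x\<bar>" by (rule pow_diff_bound[OF xb yb])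
        also have "\<dots> \<le> real (l-2) * (2/N)" using D by (intro mult_left_mono) auto
        finally show "\<bar>y^(l-2) - x^(l-2)\<bar> \<le> real (l-2) * (2 / N)" .
      qed (use N1 in auto)
      also have "\<dots> \<le> (6 + 2 * real l) / N^2"
      proof -
        have "(1 / N) * (real (l-2) * (2 / N)) = 2 * real (l-2) / N^2" by (simp add: power2_eq_square)
        moreover have "2 * real (l-2) / N^2 \<le> 2 * real l / N^2" by (intro divide_right_mono) auto
        ultimately show ?thesis by (simp add: add_divide_distrib)
      qed
      finally show ?thesis .
    qed
    have q: "\<bar>cc l * (R - 2 * Q) * x^(l-2)\<bar> \<le> \<bar>cc l\<bar> / N^2"
    proof -
      have "\<bar>cc l * (R - 2 * Q) * x^(l-2)\<bar> = \<bar>cc l\<bar> * \<bar>R - 2 * Q\<bar> * \<bar>x\<bar>^(l-2)"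
        by (simp add: abs_mult power_abs)
      also have "\<dots> \<le> \<bar>cc l\<bar> * (1 / N^2) * 1"
        using RR_QQ xb unfolding R_def Q_def by (intro mult_mono mult_left_mono) (auto simp: power_le_one)
      finally show ?thesis by simp
    qed
    have eq: "FF w (V - {j}) l - (x ^ l - real l * x ^ (l-1) * d - real l * (real l - 1) * Q * x ^ (l-2))
      = (FF w (V - {j}) l - (y ^ l - cc l * Re * y ^ (l-2))) + (y^l - x^l - real l * x^(l-1) * (y - x))
        - cc l * (Re * y^(l-2) - R * x^(l-2)) - cc l * (R - 2 * Q) * x^(l-2)"
    proof -
      have yy: "y = x - d" using yx by simp
      show ?thesis unfolding yy cc_def by (simp add: field_simps)
    qed
    have t: "\<And>a b c e f::real. \<bar>a + b - c * e - f\<bar> \<le> \<bar>a\<bar> + \<bar>b\<bar> + \<bar>c\<bar> * \<bar>e\<bar> + \<bar>f\<bar>"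
      by (simp add: abs_mult[symmetric])
    have hh: "\<bar>cc l\<bar> * \<bar>Re * y^(l-2) - R * x^(l-2)\<bar> \<le> \<bar>cc l\<bar> * ((6 + 2 * real l) / N^2)"
      using h by (rule mult_left_mono) simp
    have "\<bar>FF w (V - {j}) l - (x ^ l - real l * x ^ (l-1) * d - real l * (real l - 1) * Q * x ^ (l-2))\<bar>
        \<le> K / N^2 + real l ^ 2 / N^2 + \<bar>cc l\<bar> * ((6 + 2 * real l) / N^2) + \<bar>cc l\<bar> / N^2"
      unfolding eq using t[of _ _ "cc l"] err g hh q by (meson add_mono order_trans)
    also have "\<dots> = (K + real l ^ 2 + \<bar>cc l\<bar> * (6 + 2 * real l) + \<bar>cc l\<bar>) / N^2"
      using Npos by (simp add: field_simps)
    finally show "\<bar>FF w (V - {j}) l - (PP w V ^ l - real l * PP w V ^ (l-1) * dd w V j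
        - real l * (real l - 1) * QQ w V * PP w V ^ (l-2))\<bar> \<le> (K + real l ^ 2 + \<bar>cc l\<bar> * (6 + 2 * real l) + \<bar>cc l\<bar>) / N^2"
      unfolding x_def d_def Q_def .
  qed
qed



lemma mt_scale:
  assumes fin: "finite V" and c: "c \<noteq> 0"
  shows "(\<Sum>M\<in>matchings V m. bM bb M) = c^m * mt (\<lambda>e. ew bb e / c) V m"
proof -
  have "(\<Sum>M\<in>matchings V m. bM bb M) = (\<Sum>M\<in>matchings V m. c^m * (\<Prod>e\<in>M. ew bb e / c))"
  proof (rule sum.cong[OF refl])
    fix M assume M: "M \<in> matchings V m"
    then have "card M = m" by (simp add: matchings_def)
    then show "bM bb M = c^m * (\<Prod>e\<in>M. ew bb e / c)"
      unfolding bM_def using c by (simp add: prod_dividef)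
  qed
  then show ?thesis unfolding mt_def by (simp add: sum_distrib_left)
qed

lemma ew_pair:
  assumes "\<forall>i\<in>{1..k}. \<forall>j\<in>{1..k}. i \<noteq> j \<longrightarrow> \<bar>bb i j\<bar> \<le> 1 \<and> bb i j = bb j i"
    and "i \<in> {1..k}" "j \<in> {1..k}" "i \<noteq> j"
  shows "ew bb {i,j} = bb i j"
  using assms by (cases "i < j") (auto simp: ew_def min_def max_def)

lemma setting_k:
  assumes k: "k \<ge> 1" and hb: "\<forall>i\<in>{1..k}. \<forall>j\<in>{1..k}. i \<noteq> j \<longrightarrow> \<bar>bb i j\<bar> \<le> 1 \<and> bb i j = bb j i"
  shows "setting (\<lambda>e. ew bb e / real k ^ 2) (citizens k) (real k)"
proof
  show "finite (citizens k)" by (simp add: citizens_def)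
  show "real (card (citizens k)) \<le> real k" by (simp add: citizens_def)
  show "1 \<le> real k" using k by simp
  show "wb (\<lambda>e. ew bb e / real k ^ 2) (citizens k) (real k)"
    unfolding wb_def
  proof
    fix e assume e: "e \<in> two_sets (citizens k)"
    from two_sets_elem[OF e] have "Min e \<in> {1..k}" "Max e \<in> {1..k}" "Min e \<noteq> Max e"
      by (auto simp: citizens_def)
    then have "\<bar>ew bb e\<bar> \<le> 1" using hb by (simp add: ew_def)
    then show "\<bar>ew bb e / real k ^ 2\<bar> \<le> 1 / real k ^ 2" using k
      by (simp add: divide_right_mono)
  qed
qed

lemma PP_k:
  assumes hb: "\<forall>i\<in>{1..k}. \<forall>j\<in>{1..k}. i \<noteq> j \<longrightarrow> \<bar>bb i j\<bar> \<le> 1 \<and> bb i j = bb j i"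
    and k: "k \<ge> 1"
  shows "pair_sum k bb = real k ^ 2 * PP (\<lambda>e. ew bb e / real k ^ 2) (citizens k)"
proof -
  have "PP (\<lambda>e. ew bb e / real k ^ 2) (citizens k) = (\<Sum>e\<in>two_sets (citizens k). ew bb e) / real k ^ 2"
    unfolding PP_def by (simp add: sum_divide_distrib)
  also have "(\<Sum>e\<in>two_sets (citizens k). ew bb e) = (\<Sum>i\<in>citizens k. \<Sum>j\<in>{j\<in>citizens k. i<j}. ew bb {i,j})"
    by (rule bridge) (simp add: citizens_def)
  also have "\<dots> = pair_sum k bb"
    unfolding pair_sum_def
  proof (rule sum.cong[OF refl])
    fix i assume i: "i \<in> citizens k"
    have "{j\<in>citizens k. i<j} = {i<..k}" using i by (auto simp: citizens_def)
    moreover have "\<And>j. j \<in> {i<..k} \<Longrightarrow> ew bb {i,j} = bb i j" using i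
      by (auto simp: ew_def citizens_def min_def max_def)
    ultimately show "(\<Sum>j\<in>{j\<in>citizens k. i<j}. ew bb {i,j}) = (\<Sum>j\<in>{i<..k}. bb i j)" by simp
  qed
  finally show ?thesis using k by simp
qed

lemma dd_k:
  assumes hb: "\<forall>i\<in>{1..k}. \<forall>j\<in>{1..k}. i \<noteq> j \<longrightarrow> \<bar>bb i j\<bar> \<le> 1 \<and> bb i j = bb j i"
    and k: "k \<ge> 1" and i: "i \<in> citizens k"
  shows "real k ^ 2 * dd (\<lambda>e. ew bb e / real k ^ 2) (citizens k) i = (\<Sum>j\<in>citizens k - {i}. bb i j)"
proof -
  have "dd (\<lambda>e. ew bb e / real k ^ 2) (citizens k) i = (\<Sum>j\<in>citizens k - {i}. bb i j) / real k ^ 2"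
    unfolding dd_def sum_divide_distrib
  proof (rule sum.cong[OF refl])
    fix j assume j: "j \<in> citizens k - {i}"
    have "ew bb {i,j} = bb i j" by (rule ew_pair[OF hb]) (use i j in \<open>auto simp: citizens_def\<close>)
    then show "ew bb {i, j} / real k ^ 2 = bb i j / real k ^ 2" by simp
  qed
  then show ?thesis using k by simp
qed

lemma QQ_k:
  assumes hb: "\<forall>i\<in>{1..k}. \<forall>j\<in>{1..k}. i \<noteq> j \<longrightarrow> \<bar>bb i j\<bar> \<le> 1 \<and> bb i j = bb j i"
    and k: "k \<ge> 1"
  shows "real k ^ 4 * QQ (\<lambda>e. ew bb e / real k ^ 2) (citizens k) = Qval k bb"
proof -
  have "QQ (\<lambda>e. ew bb e / real k ^ 2) (citizens k) = (\<Sum>i\<in>citizens k. \<Sum>e\<in>two_sets (citizens k - {i}). (\<Prod>j\<in>e. bb i j) / real k ^ 4)"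
    unfolding QQ_def
  proof (intro sum.cong refl)
    fix i e assume i: "i \<in> citizens k" and e: "e \<in> two_sets (citizens k - {i})"
    have ce: "card e = 2" "e \<subseteq> citizens k - {i}" using e by (auto simp: two_sets_def)
    have "(\<Prod>j\<in>e. ew bb {i,j} / real k ^ 2) = (\<Prod>j\<in>e. bb i j / real k ^ 2)"
    proof (rule prod.cong[OF refl])
      fix j assume j: "j \<in> e"
      have "ew bb {i,j} = bb i j" by (rule ew_pair[OF hb]) (use i j ce in \<open>auto simp: citizens_def\<close>)
      then show "ew bb {i, j} / real k ^ 2 = bb i j / real k ^ 2" by simp
    qed
    also have "\<dots> = (\<Prod>j\<in>e. bb i j) / (real k ^ 2) ^ card e" by (simp add: prod_dividef)
    also have "\<dots> = (\<Prod>j\<in>e. bb i j) / real k ^ 4" using ce by (simp add: power_mult[symmetric])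
    finally show "(\<Prod>j\<in>e. ew bb {i,j} / real k ^ 2) = (\<Prod>j\<in>e. bb i j) / real k ^ 4" .
  qed
  then show ?thesis unfolding Qval_def using k by (simp add: sum_divide_distrib[symmetric])
qed



lemma rho_pow: "l \<ge> 1 \<Longrightarrow> (r::real) * r^(l-1) = r^l"
  by (cases l) auto

lemma rho_pow2: "real l * (real l - 1) * ((r::real)^2 * r^(l-2)) = real l * (real l - 1) * r^l"
proof (cases "l \<ge> 2")
  case True then have "r^2 * r^(l-2) = r^l" by (metis le_add_diff_inverse power_add)
  then show ?thesis by simp
next
  case False then have "l = 0 \<or> l = 1" by auto
  then show ?thesis by auto
qed

lemma card_rem2: "card (V - (V - {i, j})) \<le> 2"
proof -
  have "V - (V - {i, j}) \<subseteq> {i, j}" by auto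
  then have "card (V - (V - {i, j})) \<le> card {i, j}" by (rule card_mono[rotated]) simp
  also have "\<dots> \<le> 2" by (simp add: card_insert_le_m1)
  finally show ?thesis .
qed

theorem proposition3p2:
  fixes \<delta>0 :: real and l :: nat
  assumes "\<delta>0 > 0" and "l \<ge> 1"
  shows "\<exists>(k0::nat) (C::real). C > 0 \<and>
    (\<forall>k \<ge> k0. \<forall>\<delta>::real. \<forall>b::nat \<Rightarrow> real. \<forall>bb::nat \<Rightarrow> nat \<Rightarrow> real.
      \<delta>0 \<le> \<delta> \<and> \<delta> < 1
      \<and> (\<forall>i\<in>{1..k}. \<bar>b i\<bar> \<le> 1)
      \<and> (\<forall>i\<in>{1..k}. \<forall>j\<in>{1..k}. i \<noteq> j \<longrightarrow> \<bar>bb i j\<bar> \<le> 1 \<and> bb i j = bb j i)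
    \<longrightarrow> Eval \<delta> k > 0 \<and>
      (\<forall>\<Delta>::real. pair_sum k bb = Eval \<delta> k * (1 + \<Delta>) \<longrightarrow>
        \<bar>fact l / Eval \<delta> k ^ l * S1 k l b bb
          - (beta k b * (1 + \<Delta>) ^ l
             - Aval k b bb / Eval \<delta> k * real l * (1 + \<Delta>) ^ (l - 1)
             - beta k b * Qval k bb / Eval \<delta> k ^ 2 * real l * (real l - 1) * (1 + \<Delta>) ^ (l - 2))\<bar>
         \<le> C / real k
      \<and> \<bar>fact l / Eval \<delta> k ^ l * S2 k l b bb - alpha b * (1 + \<Delta>) ^ l\<bar> \<le> C / real k
      \<and> \<bar>fact l / Eval \<delta> k ^ l * S3 k l b bb
          - beta k b * Wval k bb / Eval \<delta> k * real l * (1 + \<Delta>) ^ (l - 1)\<bar> \<le> C / real k))"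
proof -
  have d0: "\<delta>0 > 0" and l1: "l \<ge> 1" using assms by auto
  obtain K1 where K1: "\<And>w V U N. setting w V N \<Longrightarrow> U \<subseteq> V \<Longrightarrow> card (V - U) \<le> 2 \<Longrightarrow>
      \<bar>FF w U l - PP w V ^ l\<bar> \<le> K1 / N" using first_order[of l] by blast
  obtain K3 where K3: "\<And>w V U N. setting w V N \<Longrightarrow> U \<subseteq> V \<Longrightarrow> card (V - U) \<le> 2 \<Longrightarrow>
      \<bar>FF w U (l-1) - PP w V ^ (l-1)\<bar> \<le> K3 / N" using first_order[of "l-1"] by blast
  obtain K2 where K2: "\<And>w V N j. setting w V N \<Longrightarrow> j \<in> V \<Longrightarrow>
     \<bar>FF w (V - {j}) l - (PP w V ^ l - real l * PP w V ^ (l-1) * dd w V j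
        - real l * (real l - 1) * QQ w V * PP w V ^ (l-2))\<bar> \<le> K2 / N^2"
    using vertex_est[of l] by blast
  define \<rho>0 where "\<rho>0 = 4 / \<delta>0^2"
  have \<rho>0pos: "\<rho>0 > 0" unfolding \<rho>0_def using d0 by simp
  define C where "C = \<rho>0^l * (\<bar>K1\<bar> + \<bar>K2\<bar> + real l * (\<bar>K3\<bar> + 1)) + 1"
  define k0 where "k0 = nat \<lceil>2 / \<delta>0^2\<rceil> + 2"
  have Cpos: "C > 0" unfolding C_def using \<rho>0pos by (intro add_nonneg_pos mult_nonneg_nonneg) auto
  have CK1: "\<rho>0^l * \<bar>K1\<bar> \<le> C" and CK2: "\<rho>0^l * \<bar>K2\<bar> \<le> C" and CK3: "real l * \<rho>0^l * (\<bar>K3\<bar> + 1) \<le> C"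
    unfolding C_def using \<rho>0pos by (auto simp: algebra_simps intro!: mult_nonneg_nonneg)
  show ?thesis
  proof (rule exI[of _ k0], rule exI[of _ C], intro conjI allI impI)
    show "C > 0" by (rule Cpos)
    fix k :: nat and \<delta> :: real and b :: "nat \<Rightarrow> real" and bb :: "nat \<Rightarrow> nat \<Rightarrow> real"
    assume "k0 \<le> k"
    assume H: "\<delta>0 \<le> \<delta> \<and> \<delta> < 1 \<and> (\<forall>i\<in>{1..k}. \<bar>b i\<bar> \<le> 1)
      \<and> (\<forall>i\<in>{1..k}. \<forall>j\<in>{1..k}. i \<noteq> j \<longrightarrow> \<bar>bb i j\<bar> \<le> 1 \<and> bb i j = bb j i)"
    then have dd0: "\<delta>0 \<le> \<delta>" and hb1: "\<forall>i\<in>{1..k}. \<bar>b i\<bar> \<le> 1"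
      and hb: "\<forall>i\<in>{1..k}. \<forall>j\<in>{1..k}. i \<noteq> j \<longrightarrow> \<bar>bb i j\<bar> \<le> 1 \<and> bb i j = bb j i" by auto
    have k2: "k \<ge> 2" using \<open>k0 \<le> k\<close> unfolding k0_def by auto
    have kbig: "real k \<ge> 2 / \<delta>0^2" using \<open>k0 \<le> k\<close> unfolding k0_def by linarith
    define N where "N = real k"
    have N1: "N \<ge> 1" using k2 unfolding N_def by simp
    define E where "E = Eval \<delta> k"
    have Ebig: "E \<ge> \<delta>0^2 * N^2 / 4 + 1"
    proof -
      have "\<delta>0^2 \<le> \<delta>^2" using d0 dd0 by (intro power_mono) auto
      then have a: "\<delta>0^2 * N^2 \<le> \<delta>^2 * N^2" by (intro mult_right_mono) auto
      have "\<delta>0^2 * N \<ge> 2" using kbig d0 unfolding N_def by (simp add: divide_le_eq mult.commute)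
      then have "\<delta>0^2 * N * N \<ge> 2 * N" using N1 by (intro mult_right_mono) auto
      then have b: "\<delta>0^2 * N^2 \<ge> 2 * N" by (simp add: power2_eq_square mult.assoc)
      show ?thesis unfolding E_def Eval_def N_def[symmetric] using a b by linarith
    qed
    have Epos: "E > 0" using Ebig d0 by (smt (verit) zero_le_power2 mult_nonneg_nonneg divide_nonneg_pos)
    then show "Eval \<delta> k > 0" unfolding E_def .
    define \<rho> where "\<rho> = N^2 / E"
    have \<rho>pos: "\<rho> > 0" unfolding \<rho>_def using Epos N1 by simp
    have \<rho>le: "\<rho> \<le> \<rho>0"
    proof -
      have "\<delta>0^2 * N^2 / 4 \<le> E" using Ebig by linarith
      then have "N^2 / E \<le> N^2 / (\<delta>0^2 * N^2 / 4)" using d0 N1 Epos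
        by (intro divide_left_mono) auto
      also have "\<dots> = \<rho>0" unfolding \<rho>0_def using N1 d0 by (simp add: field_simps)
      finally show ?thesis unfolding \<rho>_def .
    qed
    have \<rho>l: "\<rho>^l \<le> \<rho>0^l" using \<rho>pos \<rho>le by (intro power_mono) auto
    have invE: "1 / E = \<rho> / N^2" unfolding \<rho>_def using N1 Epos by simp
    define V where "V = citizens k"
    define w where "w = (\<lambda>e. ew bb e / real k ^ 2)"
    have st: "setting w V N" unfolding w_def V_def N_def using setting_k[of k bb] k2 hb by simp
    interpret setting w V N by (rule st)
    have Vsub: "V \<subseteq> {1..k}" unfolding V_def citizens_def by auto
    have finV: "finite V" unfolding V_def citizens_def by simp
    have cardVN: "real (card V) \<le> N" by (rule cardV)
    have bV: "\<And>j. j \<in> V \<Longrightarrow> \<bar>b j\<bar> \<le> 1" using hb1 Vsub by auto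
    have b1: "\<bar>b 1\<bar> \<le> 1" using hb1 k2 by auto
    have bb1: "\<And>i. i \<in> V \<Longrightarrow> \<bar>bb 1 i\<bar> \<le> 1" using hb Vsub k2 by (auto simp: V_def citizens_def)
    define x where "x = PP w V"
    have xb: "\<bar>x\<bar> \<le> 1" unfolding x_def by (rule PP_bound)
    have Nsq: "N^2 \<noteq> 0" using N1 by simp
    have mtsc: "\<And>U m. U \<subseteq> V \<Longrightarrow> (\<Sum>M\<in>matchings U m. bM bb M) = (N^2)^m * mt w U m"
      unfolding w_def N_def using finV Nsq unfolding N_def
      by (intro mt_scale) (auto intro: finite_subset)
    fix \<Delta> :: real assume HD: "pair_sum k bb = Eval \<delta> k * (1 + \<Delta>)"
    have D1: "1 + \<Delta> = \<rho> * x"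
    proof -
      have "pair_sum k bb = N^2 * x" unfolding x_def w_def V_def N_def using PP_k[OF hb] k2 by simp
      then have "E * (1 + \<Delta>) = N^2 * x" using HD unfolding E_def by simp
      then show ?thesis unfolding \<rho>_def using Epos by (simp add: field_simps)
    qed
    have fE: "\<And>m. fact m / E^m * (N^2)^m = \<rho>^m * fact m" unfolding \<rho>_def by (simp add: power_divide)
    have S1eq: "fact l / E ^ l * S1 k l b bb = \<rho>^l * (\<Sum>j\<in>V. b j * FF w (V - {j}) l)"
    proof -
      have s: "S1 k l b bb = (\<Sum>j\<in>V. b j * ((N^2)^l * mt w (V - {j}) l))"
        unfolding S1_def V_def[symmetric]
        by (rule sum.cong[OF refl]) (simp add: sum_distrib_left[symmetric] mtsc)
      show ?thesis unfolding s FF_def sum_distrib_left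
        by (intro sum.cong refl) (use Epos in \<open>simp add: \<rho>_def power_divide field_simps\<close>)
    qed
    define Q where "Q = QQ w V"
    have Aeq: "Aval k b bb = N^2 * (\<Sum>j\<in>V. b j * dd w V j)"
      unfolding Aval_def V_def[symmetric] sum_distrib_left
    proof (rule sum.cong[OF refl])
      fix j assume j: "j \<in> V"
      have "N^2 * (b j * dd w V j) = b j * (N^2 * dd w V j)" by simp
      also have "N^2 * dd w V j = (\<Sum>i\<in>V - {j}. bb j i)"
        unfolding N_def w_def V_def using dd_k[OF hb _ j[unfolded V_def]] k2 by simp
      finally show "(\<Sum>i\<in>V - {j}. b j * bb j i) = N^2 * (b j * dd w V j)"
        by (simp add: sum_distrib_left)
    qed
    have Qeq: "Qval k bb = N^4 * Q" unfolding Q_def N_def w_def V_def using QQ_k[OF hb] k2 by simp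
    have T1eq: "beta k b * (1 + \<Delta>) ^ l
             - Aval k b bb / E * real l * (1 + \<Delta>) ^ (l - 1)
             - beta k b * Qval k bb / E ^ 2 * real l * (real l - 1) * (1 + \<Delta>) ^ (l - 2)
       = \<rho>^l * (\<Sum>j\<in>V. b j * (x^l - real l * x^(l-1) * dd w V j - real l * (real l - 1) * Q * x^(l-2)))"
    proof -
      have a: "Aval k b bb / E = \<rho> * (\<Sum>j\<in>V. b j * dd w V j)" unfolding Aeq \<rho>_def by simp
      have q: "Qval k bb / E^2 = \<rho>^2 * Q" unfolding Qeq \<rho>_def by (simp add: power_divide power_mult_distrib[symmetric] power2_eq_square power4_eq_xxxx)
      have p1: "\<rho> * \<rho>^(l-1) = \<rho>^l" by (rule rho_pow[OF l1])
      have p2: "real l * (real l - 1) * (\<rho>^2 * \<rho>^(l-2)) = real l * (real l - 1) * \<rho>^l" by (rule rho_pow2)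
      have bsum: "beta k b = (\<Sum>j\<in>V. b j)" unfolding beta_def V_def ..
      define sb where "sb = (\<Sum>j\<in>V. b j * dd w V j)"
      define \<beta> where "\<beta> = beta k b"
      have hs: "(\<Sum>j\<in>V. b j * (x^l - real l * x^(l-1) * dd w V j - real l * (real l - 1) * Q * x^(l-2)))
          = \<beta> * x^l - real l * x^(l-1) * sb - real l * (real l - 1) * Q * x^(l-2) * \<beta>"
        unfolding bsum \<beta>_def sb_def by (simp add: sum_subtractf sum.distrib sum_distrib_left sum_distrib_right algebra_simps)
      have e2: "\<rho> * sb * real l * (\<rho>^(l-1) * x^(l-1)) = \<rho>^l * (real l * x^(l-1) * sb)"
      proof -
        have "\<rho> * sb * real l * (\<rho>^(l-1) * x^(l-1)) = (\<rho> * \<rho>^(l-1)) * (real l * x^(l-1) * sb)" by (simp add: algebra_simps)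
        then show ?thesis unfolding p1 .
      qed
      have e3: "\<beta> * (\<rho>^2 * Q) * real l * (real l - 1) * (\<rho>^(l-2) * x^(l-2)) = \<rho>^l * (real l * (real l - 1) * Q * x^(l-2) * \<beta>)"
      proof -
        have "\<beta> * (\<rho>^2 * Q) * real l * (real l - 1) * (\<rho>^(l-2) * x^(l-2)) = (real l * (real l - 1) * (\<rho>^2 * \<rho>^(l-2))) * (Q * x^(l-2) * \<beta>)" by (simp add: algebra_simps)
        then show ?thesis unfolding p2 by (simp add: algebra_simps)
      qed
      have "beta k b * (1 + \<Delta>) ^ l
             - Aval k b bb / E * real l * (1 + \<Delta>) ^ (l - 1)
             - beta k b * Qval k bb / E ^ 2 * real l * (real l - 1) * (1 + \<Delta>) ^ (l - 2)
          = \<beta> * (\<rho>^l * x^l) - \<rho> * sb * real l * (\<rho>^(l-1) * x^(l-1)) - \<beta> * (\<rho>^2 * Q) * real l * (real l - 1) * (\<rho>^(l-2) * x^(l-2))"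
      proof -
        have q2: "beta k b * Qval k bb / E ^ 2 = beta k b * (\<rho>^2 * Q)" using q by (metis times_divide_eq_right)
        show ?thesis unfolding D1 a q2 power_mult_distrib \<beta>_def sb_def by (simp add: mult.assoc)
      qed
      also have "\<dots> = \<rho>^l * (\<beta> * x^l - real l * x^(l-1) * sb - real l * (real l - 1) * Q * x^(l-2) * \<beta>)"
        unfolding e2 e3 by (simp add: algebra_simps)
      finally show ?thesis unfolding hs .
    qed
    have S1b: "\<bar>(\<Sum>j\<in>V. b j * FF w (V - {j}) l) - (\<Sum>j\<in>V. b j * (x^l - real l * x^(l-1) * dd w V j - real l * (real l - 1) * Q * x^(l-2)))\<bar> \<le> \<bar>K2\<bar> / N"
    proof -
      have "\<bar>(\<Sum>j\<in>V. b j * FF w (V - {j}) l) - (\<Sum>j\<in>V. b j * (x^l - real l * x^(l-1) * dd w V j - real l * (real l - 1) * Q * x^(l-2)))\<bar>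
          = \<bar>\<Sum>j\<in>V. b j * (FF w (V - {j}) l - (x^l - real l * x^(l-1) * dd w V j - real l * (real l - 1) * Q * x^(l-2)))\<bar>"
        by (simp only: right_diff_distrib sum_subtractf)
      also have "\<dots> \<le> (\<Sum>j\<in>V. \<bar>K2\<bar> / N^2)"
      proof (intro order_trans[OF sum_abs] sum_mono)
        fix j assume j: "j \<in> V"
        have "\<bar>FF w (V - {j}) l - (x^l - real l * x^(l-1) * dd w V j - real l * (real l - 1) * Q * x^(l-2))\<bar> \<le> \<bar>K2\<bar> / N^2"
          using K2[OF st j] unfolding x_def Q_def by (smt (verit) divide_right_mono zero_le_power2)
        then show "\<bar>b j * (FF w (V - {j}) l - (x^l - real l * x^(l-1) * dd w V j - real l * (real l - 1) * Q * x^(l-2)))\<bar> \<le> \<bar>K2\<bar> / N^2"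
          unfolding abs_mult using bV[OF j] by (simp add: mult_le_one mult_le_cancel_right1 order_trans[OF mult_right_mono])
      qed
      also have "\<dots> = real (card V) * (\<bar>K2\<bar> / N^2)" by simp
      also have "\<dots> \<le> N * (\<bar>K2\<bar> / N^2)" using cardVN by (intro mult_right_mono) auto
      also have "\<dots> = \<bar>K2\<bar> / N" using N1 by (simp add: power2_eq_square)
      finally show ?thesis .
    qed
    show "\<bar>fact l / Eval \<delta> k ^ l * S1 k l b bb
          - (beta k b * (1 + \<Delta>) ^ l
             - Aval k b bb / Eval \<delta> k * real l * (1 + \<Delta>) ^ (l - 1)
             - beta k b * Qval k bb / Eval \<delta> k ^ 2 * real l * (real l - 1) * (1 + \<Delta>) ^ (l - 2))\<bar>
         \<le> C / real k"
    proof -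
      have "\<bar>fact l / E ^ l * S1 k l b bb
          - (beta k b * (1 + \<Delta>) ^ l
             - Aval k b bb / E * real l * (1 + \<Delta>) ^ (l - 1)
             - beta k b * Qval k bb / E ^ 2 * real l * (real l - 1) * (1 + \<Delta>) ^ (l - 2))\<bar>
         = \<rho>^l * \<bar>(\<Sum>j\<in>V. b j * FF w (V - {j}) l) - (\<Sum>j\<in>V. b j * (x^l - real l * x^(l-1) * dd w V j - real l * (real l - 1) * Q * x^(l-2)))\<bar>"
        unfolding S1eq T1eq using \<rho>pos by (simp add: abs_mult right_diff_distrib[symmetric])
      also have "\<dots> \<le> \<rho>0^l * (\<bar>K2\<bar> / N)" using S1b \<rho>l \<rho>pos \<rho>0pos by (intro mult_mono) auto
      also have "\<dots> \<le> C / N" using CK2 N1 by (simp add: divide_right_mono)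
      finally show ?thesis unfolding E_def N_def .
    qed
    show "\<bar>fact l / Eval \<delta> k ^ l * S2 k l b bb - alpha b * (1 + \<Delta>) ^ l\<bar> \<le> C / real k"
    proof -
      have "S2 k l b bb = b 1 * ((N^2)^l * mt w V l)" unfolding S2_def V_def[symmetric] by (simp add: mtsc)
      then have "fact l / E ^ l * S2 k l b bb - alpha b * (1 + \<Delta>) ^ l = b 1 * \<rho>^l * (FF w V l - x^l)"
        unfolding D1 alpha_def FF_def using fE[of l] by (simp add: algebra_simps power_mult_distrib)
      then have "\<bar>fact l / E ^ l * S2 k l b bb - alpha b * (1 + \<Delta>) ^ l\<bar> = \<bar>b 1\<bar> * \<rho>^l * \<bar>FF w V l - x^l\<bar>"
        using \<rho>pos by (simp add: abs_mult)
      also have "\<dots> \<le> 1 * \<rho>0^l * (\<bar>K1\<bar> / N)"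
      proof (intro mult_mono)
        show "\<bar>FF w V l - x^l\<bar> \<le> \<bar>K1\<bar> / N" using K1[OF st, of V] unfolding x_def
          by (smt (verit) N1 divide_right_mono Diff_cancel card.empty subset_refl zero_le_numeral)
      qed (use b1 \<rho>l \<rho>pos \<rho>0pos in auto)
      also have "\<dots> \<le> C / N" using CK1 N1 by (simp add: divide_right_mono)
      finally show ?thesis unfolding E_def N_def .
    qed
    show "\<bar>fact l / Eval \<delta> k ^ l * S3 k l b bb
          - beta k b * Wval k bb / Eval \<delta> k * real l * (1 + \<Delta>) ^ (l - 1)\<bar> \<le> C / real k"
    proof -
      define G where "G j i = FF w (V - {i, j}) (l-1)" for i j
      have S3eq: "fact l / E ^ l * S3 k l b bb = real l * \<rho>^(l-1) / E * (\<Sum>j\<in>V. \<Sum>i\<in>V - {j}. b j * bb 1 i * G j i)"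
      proof -
        have s: "S3 k l b bb = (\<Sum>j\<in>V. \<Sum>i\<in>V - {j}. b j * bb 1 i * ((N^2)^(l-1) * mt w (V - {i, j}) (l-1)))"
          unfolding S3_def V_def[symmetric]
          by (intro sum.cong refl) (simp add: sum_distrib_left[symmetric] mtsc)
        have f: "fact l = real l * fact (l-1)" using l1 by (cases l) auto
        have eE: "E^l = E * E^(l-1)" using l1 by (cases l) auto
        have gen: "\<And>F P c m. real l * F / (E * E^(l-1)) * (c * (P * m)) = real l * (P / E^(l-1)) / E * (c * (F * m))"
          using Epos by (simp add: field_simps)
        show ?thesis unfolding s sum_distrib_left G_def FF_def f eE \<rho>_def power_divide
          apply (rule sum.cong[OF refl])
          apply (rule sum.cong[OF refl])
          apply (simp only: gen)
          done
      qed
      have Weq: "beta k b * Wval k bb = (\<Sum>j\<in>V. \<Sum>i\<in>V - {j}. b j * bb 1 i) + (\<Sum>j\<in>V. b j * bb 1 j)"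
      proof -
        have "beta k b * Wval k bb = (\<Sum>j\<in>V. \<Sum>i\<in>V. b j * bb 1 i)"
          unfolding beta_def Wval_def V_def[symmetric] by (simp add: sum_product)
        also have "\<dots> = (\<Sum>j\<in>V. (\<Sum>i\<in>V - {j}. b j * bb 1 i) + b j * bb 1 j)"
          by (intro sum.cong refl) (simp add: finV sum.remove add.commute)
        finally show ?thesis by (simp add: sum.distrib)
      qed
      have inner: "\<bar>(\<Sum>j\<in>V. \<Sum>i\<in>V - {j}. b j * bb 1 i * G j i) - beta k b * Wval k bb * x^(l-1)\<bar> \<le> N * (\<bar>K3\<bar> + 1)"
      proof -
        have e0: "(\<Sum>j\<in>V. \<Sum>i\<in>V - {j}. b j * bb 1 i * G j i) - beta k b * Wval k bb * x^(l-1)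
          = (\<Sum>j\<in>V. \<Sum>i\<in>V - {j}. b j * bb 1 i * (G j i - x^(l-1))) - (\<Sum>j\<in>V. b j * bb 1 j) * x^(l-1)"
        proof -
          have z: "(\<Sum>j\<in>V. \<Sum>i\<in>V-{j}. b j * bb 1 i * (G j i - x^(l-1))) = (\<Sum>j\<in>V. \<Sum>i\<in>V-{j}. b j * bb 1 i * G j i) - (\<Sum>j\<in>V. \<Sum>i\<in>V-{j}. b j * bb 1 i) * x^(l-1)"
            by (simp only: right_diff_distrib sum_subtractf sum_distrib_right)
          show ?thesis unfolding Weq z by (simp add: algebra_simps)
        qed
        have e1: "\<bar>\<Sum>j\<in>V. \<Sum>i\<in>V - {j}. b j * bb 1 i * (G j i - x^(l-1))\<bar> \<le> N * \<bar>K3\<bar>"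
        proof -
          have "\<bar>\<Sum>j\<in>V. \<Sum>i\<in>V - {j}. b j * bb 1 i * (G j i - x^(l-1))\<bar> \<le> (\<Sum>j\<in>V. \<Sum>i\<in>V - {j}. \<bar>K3\<bar> / N)"
          proof (intro order_trans[OF sum_abs] sum_mono order_trans[OF sum_abs])
            fix j i assume j: "j \<in> V" and i: "i \<in> V - {j}"
            have g: "\<bar>G j i - x^(l-1)\<bar> \<le> \<bar>K3\<bar> / N" unfolding G_def x_def
              using K3[OF st, of "V - {i, j}"] card_rem2[of V i j] N1
              by (smt (verit) Diff_subset divide_right_mono)
            have "\<bar>b j * bb 1 i\<bar> \<le> 1" using bV[OF j] bb1[of i] i by (simp add: abs_mult mult_le_one)
            then show "\<bar>b j * bb 1 i * (G j i - x^(l-1))\<bar> \<le> \<bar>K3\<bar> / N"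
              unfolding abs_mult[of "b j * bb 1 i"] using g
              by (meson abs_ge_zero mult_left_le_one_le order_trans mult_left_mono)
          qed
          also have "\<dots> \<le> (\<Sum>j\<in>V. N * (\<bar>K3\<bar> / N))"
          proof (intro sum_mono)
            fix j assume "j \<in> V"
            have "real (card (V - {j})) \<le> N" using cardVN finV
              by (meson card_Diff1_le of_nat_le_iff order_trans)
            then have "real (card (V - {j})) * (\<bar>K3\<bar> / N) \<le> N * (\<bar>K3\<bar> / N)"
              using N1 by (intro mult_right_mono) auto
            then show "(\<Sum>i\<in>V - {j}. \<bar>K3\<bar> / N) \<le> N * (\<bar>K3\<bar> / N)" by simp
          qed
          also have "\<dots> = real (card V) * \<bar>K3\<bar>" using N1 by simp
          also have "\<dots> \<le> N * \<bar>K3\<bar>" using cardVN by (intro mult_right_mono) auto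
          finally show ?thesis .
        qed
        have e2: "\<bar>(\<Sum>j\<in>V. b j * bb 1 j) * x^(l-1)\<bar> \<le> N"
        proof -
          have "\<bar>\<Sum>j\<in>V. b j * bb 1 j\<bar> \<le> (\<Sum>j\<in>V. 1)"
            using bV bb1 by (intro order_trans[OF sum_abs] sum_mono) (simp add: abs_mult mult_le_one)
          also have "\<dots> \<le> N" using cardVN by simp
          finally have "\<bar>\<Sum>j\<in>V. b j * bb 1 j\<bar> \<le> N" .
          moreover have "\<bar>x^(l-1)\<bar> \<le> 1" using xb by (simp add: power_abs power_le_one)
          ultimately have "\<bar>\<Sum>j\<in>V. b j * bb 1 j\<bar> * \<bar>x^(l-1)\<bar> \<le> N * 1" using N1 by (intro mult_mono) auto
          then show ?thesis by (simp add: abs_mult)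
        qed
        have "\<bar>(\<Sum>j\<in>V. \<Sum>i\<in>V - {j}. b j * bb 1 i * G j i) - beta k b * Wval k bb * x^(l-1)\<bar>
           \<le> \<bar>\<Sum>j\<in>V. \<Sum>i\<in>V - {j}. b j * bb 1 i * (G j i - x^(l-1))\<bar> + \<bar>(\<Sum>j\<in>V. b j * bb 1 j) * x^(l-1)\<bar>"
          unfolding e0 by (rule abs_triangle_ineq4)
        also have "\<dots> \<le> N * \<bar>K3\<bar> + N" using e1 e2 by (rule add_mono)
        finally show ?thesis by (simp add: algebra_simps)
      qed
      have "fact l / E ^ l * S3 k l b bb - beta k b * Wval k bb / E * real l * (1 + \<Delta>) ^ (l - 1)
         = real l * \<rho>^(l-1) / E * ((\<Sum>j\<in>V. \<Sum>i\<in>V - {j}. b j * bb 1 i * G j i) - beta k b * Wval k bb * x^(l-1))"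
      proof -
        have gen: "\<And>a r S c X. a * r / E * S - c / E * a * (r * X) = a * r / E * (S - c * X)"
          using Epos by (simp add: field_simps)
        show ?thesis unfolding S3eq D1 power_mult_distrib by (rule gen)
      qed
      then have "\<bar>fact l / E ^ l * S3 k l b bb - beta k b * Wval k bb / E * real l * (1 + \<Delta>) ^ (l - 1)\<bar>
         = real l * \<rho>^(l-1) / E * \<bar>(\<Sum>j\<in>V. \<Sum>i\<in>V - {j}. b j * bb 1 i * G j i) - beta k b * Wval k bb * x^(l-1)\<bar>"
        using \<rho>pos Epos by (simp add: abs_mult)
      also have "\<dots> \<le> real l * \<rho>^(l-1) / E * (N * (\<bar>K3\<bar> + 1))"
        using inner \<rho>pos Epos by (intro mult_left_mono) auto
      also have "\<dots> = real l * \<rho>^l * (\<bar>K3\<bar> + 1) / N"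
      proof -
        have "real l * \<rho>^(l-1) / E * (N * (\<bar>K3\<bar> + 1)) = real l * \<rho>^(l-1) * (1 / E) * N * (\<bar>K3\<bar> + 1)" by simp
        also have "\<dots> = real l * (\<rho> * \<rho>^(l-1)) * (\<bar>K3\<bar> + 1) / N" unfolding invE using N1
          by (simp add: power2_eq_square field_simps)
        finally show ?thesis using rho_pow[OF l1, of \<rho>] by simp
      qed
      also have "\<dots> \<le> real l * \<rho>0^l * (\<bar>K3\<bar> + 1) / N"
        using \<rho>l N1 by (intro divide_right_mono mult_right_mono mult_left_mono) auto
      also have "\<dots> \<le> C / N" using CK3 N1 by (simp add: divide_right_mono)
      finally show ?thesis unfolding E_def N_def .
    qed
  qed
qed


end
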